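(* Let $X$ be a compact metrizable space and let $\Delta$ be a closed set of Borel probability measures on $X$. The C*-algebra $\ell^\infty(\mathrm{C}(X))/J_{2,\omega,\Delta}$ has real rank zero if, and only if, $(X,\Delta)$ has the small boundary property.
   Context: "Closed" refers to the weak* topology; measures $\mu$ act as traces $\tau_\mu(f)=\int f\,d\mu$. $\omega$ is a free ultrafilter on $\mathbb N$ and $J_{2,\omega,\Delta}=\{(f_n)\in\ell^\infty(\mathrm{C}(X)):\lim_{n\to\omega}\sup_{\tau\in\Delta}\tau(|f_n|^2)=0\}$. A unital C*-algebra has real rank zero if its invertible self-adjoint elements are norm-dense in its self-adjoint elements. $(X,\Delta)$ has the small boundary property if for every $x\in X$ and every open $U\ni x$ there is an open neighbourhood $V\subseteq U$ of $x$ with $\mu(\partial V)=0$ for all $\mu\in\Delta$. *)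

theory Defs
  imports "HOL-Analysis.Analysis" "HOL-Probability.Probability"
begin

definition borel_prob :: "'a::metric_space measure \<Rightarrow> bool" where
  "borel_prob M \<longleftrightarrow> sets M = sets borel \<and> prob_space M"

text \<open>Delta is closed in the weak* topology (measures act as traces f |-> integral of f).
  A measure is in the weak* closure of Delta iff every basic weak* neighbourhood of it meets Delta.\<close>
definition weak_star_closed :: "'a::metric_space measure set \<Rightarrow> bool" where
  "weak_star_closed \<Delta> \<longleftrightarrow>
     (\<forall>\<mu>. borel_prob \<mu> \<and>
        (\<forall>F \<epsilon>. finite F \<and> (\<forall>f\<in>F. continuous_on UNIV (f :: 'a \<Rightarrow> complex)) \<and> \<epsilon> > 0 \<longrightarrow>
           (\<exists>\<nu>\<in>\<Delta>. \<forall>f\<in>F. cmod (integral\<^sup>L \<mu> f - integral\<^sup>L \<nu> f) < \<epsilon>))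
      \<longrightarrow> \<mu> \<in> \<Delta>)"

definition free_ultrafilter :: "nat filter \<Rightarrow> bool" where
  "free_ultrafilter \<omega> \<longleftrightarrow> \<omega> \<noteq> bot \<and>
     (\<forall>P. eventually P \<omega> \<or> eventually (\<lambda>n. \<not> P n) \<omega>) \<and>
     (\<forall>k. eventually (\<lambda>n. n \<noteq> k) \<omega>)"

definition ell_inf :: "(nat \<Rightarrow> 'a::topological_space \<Rightarrow> complex) set" where
  "ell_inf = {f. (\<forall>n. continuous_on UNIV (f n)) \<and> (\<exists>B. \<forall>n x. cmod (f n x) \<le> B)}"

definition ell_norm :: "(nat \<Rightarrow> 'a \<Rightarrow> complex) \<Rightarrow> real" where
  "ell_norm f = (SUP n. SUP x. cmod (f n x))"

definition trace_sup :: "'a measure set \<Rightarrow> ('a \<Rightarrow> real) \<Rightarrow> real" where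
  "trace_sup \<Delta> g = (if \<Delta> = {} then 0 else (SUP \<mu>\<in>\<Delta>. integral\<^sup>L \<mu> g))"

definition J2 :: "nat filter \<Rightarrow> 'a::topological_space measure set \<Rightarrow> (nat \<Rightarrow> 'a \<Rightarrow> complex) set" where
  "J2 \<omega> \<Delta> = {f \<in> ell_inf. ((\<lambda>n. trace_sup \<Delta> (\<lambda>x. (cmod (f n x))\<^sup>2)) \<longlongrightarrow> 0) \<omega>}"

definition quot_norm :: "(nat \<Rightarrow> 'a \<Rightarrow> complex) set \<Rightarrow> (nat \<Rightarrow> 'a \<Rightarrow> complex) \<Rightarrow> real" where
  "quot_norm J f = (INF j\<in>J. ell_norm (\<lambda>n x. f n x - j n x))"

definition quot_selfadj :: "(nat \<Rightarrow> 'a \<Rightarrow> complex) set \<Rightarrow> (nat \<Rightarrow> 'a \<Rightarrow> complex) \<Rightarrow> bool" where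
  "quot_selfadj J a \<longleftrightarrow> (\<lambda>n x. a n x - cnj (a n x)) \<in> J"

definition quot_invertible :: "(nat \<Rightarrow> 'a::topological_space \<Rightarrow> complex) set \<Rightarrow> (nat \<Rightarrow> 'a \<Rightarrow> complex) \<Rightarrow> bool" where
  "quot_invertible J a \<longleftrightarrow> (\<exists>b\<in>ell_inf. (\<lambda>n x. a n x * b n x - 1) \<in> J \<and> (\<lambda>n x. b n x * a n x - 1) \<in> J)"

text \<open>Real rank zero of ell^infty(C(X))/J: invertible self-adjoint elements are norm-dense
  among self-adjoint elements.\<close>
definition quot_real_rank_zero :: "(nat \<Rightarrow> 'a::topological_space \<Rightarrow> complex) set \<Rightarrow> bool" where
  "quot_real_rank_zero J \<longleftrightarrow>
     (\<forall>a\<in>ell_inf. quot_selfadj J a \<longrightarrow>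
        (\<forall>\<epsilon>>0. \<exists>c\<in>ell_inf. quot_selfadj J c \<and> quot_invertible J c \<and>
                  quot_norm J (\<lambda>n x. a n x - c n x) < \<epsilon>))"

definition small_boundary_property :: "'a::topological_space measure set \<Rightarrow> bool" where
  "small_boundary_property \<Delta> \<longleftrightarrow>
     (\<forall>x U. open U \<and> x \<in> U \<longrightarrow>
        (\<exists>V. open V \<and> x \<in> V \<and> V \<subseteq> U \<and> (\<forall>\<mu>\<in>\<Delta>. measure \<mu> (frontier V) = 0)))"

end

theory Submission
  imports Defs
begin

lemma bp_sets: "borel_prob M \<Longrightarrow> sets M = sets borel"
  by (simp add: borel_prob_def)
lemma bp_space: "borel_prob M \<Longrightarrow> space M = UNIV"
  using sets_eq_imp_space_eq[OF bp_sets[of M]] by simp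
lemma bp_prob: "borel_prob M \<Longrightarrow> prob_space M"
  by (simp add: borel_prob_def)
lemma bp_meas: "borel_prob M \<Longrightarrow> continuous_on UNIV f \<Longrightarrow> f \<in> borel_measurable M"
  using measurable_cong_sets[OF bp_sets[of M] refl] borel_measurable_continuous_onI by blast

lemma ultra_conv:
  fixes s :: "nat \<Rightarrow> real"
  assumes fu: "free_ultrafilter \<omega>" and b: "\<And>k. \<bar>s k\<bar> \<le> B"
  shows "\<exists>l. (s \<longlongrightarrow> l) \<omega>"
proof -
  have nb: "\<omega> \<noteq> bot" and ult: "\<And>P. eventually P \<omega> \<or> eventually (\<lambda>n. \<not> P n) \<omega>"
    using fu unfolding free_ultrafilter_def by auto
  have comp: "compact {-B..B}" by simp
  have sk: "s k \<in> {-B..B}" for k using b[of k] by (auto simp: abs_le_iff)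
  have ev: "eventually (\<lambda>x. x \<in> {-B..B}) (filtermap s \<omega>)"
    unfolding eventually_filtermap using sk by (auto intro!: always_eventually)
  have "filtermap s \<omega> \<noteq> bot" using nb by (simp add: filtermap_bot_iff)
  then obtain l where l: "nhds l \<sqinter> filtermap s \<omega> \<noteq> bot"
    using comp ev unfolding compact_filter by blast
  have "(s \<longlongrightarrow> l) \<omega>"
    unfolding tendsto_def
  proof (intro allI impI)
    fix S assume S: "open S" "l \<in> S"
    show "eventually (\<lambda>k. s k \<in> S) \<omega>"
    proof (rule ccontr)
      assume "\<not> eventually (\<lambda>k. s k \<in> S) \<omega>"
      then have e2: "eventually (\<lambda>k. s k \<notin> S) \<omega>" using ult[of "\<lambda>k. s k \<in> S"] by auto
      have e1: "eventually (\<lambda>x. x \<in> S) (nhds l)" using S eventually_nhds by blast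
      have "eventually (\<lambda>x. False) (nhds l \<sqinter> filtermap s \<omega>)"
        unfolding eventually_inf
        apply (rule exI[of _ "\<lambda>x. x \<in> S"], rule exI[of _ "\<lambda>x. x \<notin> S"])
        using e1 e2 by (auto simp: eventually_filtermap)
      then show False using l by (simp add: eventually_False)
    qed
  qed
  then show ?thesis by blast
qed

lemma ultra_Lim:
  fixes s :: "nat \<Rightarrow> real"
  assumes fu: "free_ultrafilter \<omega>" and b: "\<And>k. \<bar>s k\<bar> \<le> B"
  shows "(s \<longlongrightarrow> Lim \<omega> s) \<omega>"
proof -
  have nb: "\<omega> \<noteq> bot" using fu unfolding free_ultrafilter_def by auto
  obtain l where "(s \<longlongrightarrow> l) \<omega>" using ultra_conv[of \<omega> s B] fu b by blast
  moreover then have "Lim \<omega> s = l" using tendsto_Lim[OF nb] by blast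
  ultimately show ?thesis by simp
qed

lemma fu_nb: "free_ultrafilter \<omega> \<Longrightarrow> \<omega> \<noteq> bot"
  unfolding free_ultrafilter_def by auto

lemma fu_seq: "free_ultrafilter \<omega> \<Longrightarrow> \<omega> \<le> sequentially"
proof -
  assume fu: "free_ultrafilter \<omega>"
  have k: "\<And>k. eventually (\<lambda>n. n \<noteq> k) \<omega>" using fu unfolding free_ultrafilter_def by auto
  have "eventually (\<lambda>n. N \<le> n) \<omega>" for N
  proof (induction N)
    case 0 then show ?case by simp
  next
    case (Suc N)
    from eventually_conj[OF Suc k[of N]] show ?case
      by (rule eventually_mono) auto
  qed
  then show ?thesis
    unfolding le_filter_def eventually_sequentially
    by (metis (mono_tags, lifting) eventually_mono)
qed

lemma od_d[simp]: "of_discrete (discrete a) = a"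
  by (simp add: discrete_inverse)
lemma d_od[simp]: "discrete (of_discrete d) = d"
  by (simp add: of_discrete_inverse)
lemma discrete_eq_iff: "discrete a = d \<longleftrightarrow> a = of_discrete d"
  by auto

lemma dist_meas[measurable]: "(\<lambda>x. dist (c::'a::metric_space) x) \<in> borel_measurable borel"
  by (intro borel_measurable_continuous_onI continuous_intros)

locale rz =
  fixes \<mu> :: "nat \<Rightarrow> 'a::metric_space measure" and \<omega> :: "nat filter" and cs :: "nat \<Rightarrow> 'a list"
  assumes cpt: "compact (UNIV::'a set)"
    and bp: "\<And>k. borel_prob (\<mu> k)"
    and fu: "free_ultrafilter \<omega>"
    and cov: "\<And>m x. \<exists>i<length (cs m). dist (cs m ! i) x < (1/2)^m"
begin

definition "NN m = length (cs m)"
definition "dg m x = (LEAST i. dist (cs m ! i) x < (1/2::real)^m)"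
definition "io x = (\<lambda>m. discrete (dg m x))"
definition "TT J = PiE J (\<lambda>m. discrete ` {..<NN m})"

lemma dg: "dg m x < NN m \<and> dist (cs m ! dg m x) x < (1/2)^m"
proof -
  obtain i where i: "i < length (cs m)" "dist (cs m ! i) x < (1/2)^m" using cov by blast
  have 1: "dist (cs m ! dg m x) x < (1/2)^m" unfolding dg_def using i(2) by (rule LeastI)
  have "dg m x \<le> i" unfolding dg_def using i(2) by (rule Least_le)
  then show ?thesis using 1 i(1) by (simp add: NN_def)
qed

lemma dg_eq: "{x. dg m x = i} = {x. dist (cs m ! i) x < (1/2)^m \<and> (\<forall>j<i. (1/2)^m \<le> dist (cs m ! j) x)}"
proof (rule set_eqI, rule iffI)
  fix x assume "x \<in> {x. dg m x = i}"
  then have h: "dg m x = i" by simp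
  have "\<not> dist (cs m ! j) x < (1/2)^m" if "j < i" for j
    using not_less_Least[of j "\<lambda>i. dist (cs m ! i) x < (1/2::real)^m"] that h unfolding dg_def by blast
  then have 1: "\<forall>j<i. (1/2)^m \<le> dist (cs m ! j) x" using not_less by blast
  have 2: "dist (cs m ! i) x < (1/2)^m" using dg[of m x] h by blast
  show "x \<in> {x. dist (cs m ! i) x < (1/2)^m \<and> (\<forall>j<i. (1/2)^m \<le> dist (cs m ! j) x)}"
    using 1 2 by blast
next
  fix x assume "x \<in> {x. dist (cs m ! i) x < (1/2)^m \<and> (\<forall>j<i. (1/2)^m \<le> dist (cs m ! j) x)}"
  then have a1: "dist (cs m ! i) x < (1/2)^m" and a2: "\<forall>j<i. (1/2)^m \<le> dist (cs m ! j) x" by auto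
  have "dg m x = i" unfolding dg_def
  proof (rule Least_equality)
    show "dist (cs m ! i) x < (1/2)^m" by (rule a1)
    fix y assume y: "dist (cs m ! y) x < (1/2)^m"
    show "i \<le> y"
    proof (rule ccontr)
      assume "\<not> i \<le> y"
      then have "y < i" by simp
      then have "(1/2)^m \<le> dist (cs m ! y) x" using a2 by blast
      then show False using y by simp
    qed
  qed
  then show "x \<in> {x. dg m x = i}" by simp
qed

lemma dg_set[measurable]: "{x. dg m x = i} \<in> sets borel"
  unfolding dg_eq by measurable

lemma dg_meas[measurable]: "dg m \<in> borel \<rightarrow>\<^sub>M count_space UNIV"
  by (subst measurable_count_space_eq2_countable) (auto simp: vimage_def dg_set)

lemma io_set: "{x. restrict (io x) J = t} \<in> sets borel"
proof (cases "t \<in> extensional J")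
  case True
  have "{x. restrict (io x) J = t} = {x. \<forall>m\<in>J. dg m x = of_discrete (t m)}"
    using True by (auto simp: io_def restrict_def extensional_def fun_eq_iff discrete_eq_iff
        split: if_splits)
  then show ?thesis unfolding \<open>{x. restrict (io x) J = t} = _\<close> by measurable
next
  case False
  then have "{x. restrict (io x) J = t} = {}" by auto
  then show ?thesis by simp
qed

definition "pj J x = restrict (io x) J"

lemma pj_ext: "m \<notin> J \<Longrightarrow> pj J x m = undefined"
  by (simp add: pj_def)

lemma pj_TT: "pj J x \<in> TT J"
  using dg by (auto simp: pj_def TT_def io_def)

lemma finite_TT: "finite J \<Longrightarrow> finite (TT J)"
  unfolding TT_def by (intro finite_PiE) auto

lemma pj_set[measurable]: "{x. pj J x = t} \<in> sets borel"
  unfolding pj_def by (rule io_set)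

lemma mu_sets: "sets (\<mu> k) = sets borel" using bp bp_sets by blast
lemma mu_space: "space (\<mu> k) = UNIV" using bp bp_space by blast
lemma mu_prob: "prob_space (\<mu> k)" using bp bp_prob by blast

lemma pj_set_mu: "{x. pj J x = t} \<in> sets (\<mu> k)"
  using mu_sets pj_set by blast

lemma sumJ:
  assumes "finite J"
  shows "measure (\<mu> k) {x. pj J x \<in> A} = (\<Sum>t\<in>TT J \<inter> A. measure (\<mu> k) {x. pj J x = t})"
proof -
  interpret prob_space "\<mu> k" by (rule mu_prob)
  have "{x. pj J x \<in> A} = (\<Union>t\<in>TT J \<inter> A. {x. pj J x = t})" using pj_TT by auto
  moreover have "measure (\<mu> k) (\<Union>t\<in>TT J \<inter> A. {x. pj J x = t}) = (\<Sum>t\<in>TT J \<inter> A. measure (\<mu> k) {x. pj J x = t})"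
    by (rule finite_measure_finite_Union) (use assms finite_TT pj_set_mu in \<open>auto simp: disjoint_family_on_def\<close>)
  ultimately show ?thesis by simp
qed

definition "w J t = Lim \<omega> (\<lambda>k. measure (\<mu> k) {x. pj J x = t})"

lemma nb: "\<omega> \<noteq> bot" using fu fu_nb by blast

lemma meas_bound: "\<bar>measure (\<mu> k) S\<bar> \<le> 1"
proof -
  interpret prob_space "\<mu> k" by (rule mu_prob)
  show ?thesis by simp
qed

lemma w_tend: "((\<lambda>k. measure (\<mu> k) {x. pj J x = t}) \<longlongrightarrow> w J t) \<omega>"
  unfolding w_def by (rule ultra_Lim[OF fu meas_bound])

lemma w_nonneg: "0 \<le> w J t"
  by (rule tendsto_lowerbound[OF w_tend _ nb]) auto

lemma limA:
  assumes "finite J"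
  shows "((\<lambda>k. measure (\<mu> k) {x. pj J x \<in> A}) \<longlongrightarrow> (\<Sum>t\<in>TT J \<inter> A. w J t)) \<omega>"
  unfolding sumJ[OF assms] by (intro tendsto_sum w_tend)

lemma w_sum1:
  assumes "finite J"
  shows "(\<Sum>t\<in>TT J. w J t) = 1"
proof -
  have "((\<lambda>k. measure (\<mu> k) {x. pj J x \<in> UNIV}) \<longlongrightarrow> (\<Sum>t\<in>TT J. w J t)) \<omega>"
    using limA[OF assms, of UNIV] by simp
  moreover have "measure (\<mu> k) {x. pj J x \<in> UNIV} = 1" for k
  proof -
    interpret prob_space "\<mu> k" by (rule mu_prob)
    show ?thesis using prob_space mu_space by simp
  qed
  ultimately have "((\<lambda>k. 1) \<longlongrightarrow> (\<Sum>t\<in>TT J. w J t)) \<omega>" by simp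
  then show ?thesis using tendsto_unique[OF nb] tendsto_const by metis
qed

lemma w_out: "t \<notin> TT J \<Longrightarrow> w J t = 0"
proof -
  assume t: "t \<notin> TT J"
  then have "{x. pj J x = t} = {}" using pj_TT by auto
  then have "((\<lambda>k. 0) \<longlongrightarrow> w J t) \<omega>" using w_tend[of J t] by simp
  then show ?thesis using tendsto_unique[OF nb] tendsto_const by metis
qed

definition "pp J = embed_pmf (w J)"

lemma pmf_pp:
  assumes "finite J"
  shows "pmf (pp J) t = w J t"
proof -
  have "(\<integral>\<^sup>+ x. ennreal (w J x) \<partial>count_space UNIV) = (\<Sum>x\<in>TT J. ennreal (w J x))"
    by (rule nn_integral_count_space') (use assms finite_TT w_out in auto)
  also have "\<dots> = ennreal (\<Sum>x\<in>TT J. w J x)" by (rule sum_ennreal) (simp add: w_nonneg)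
  also have "\<dots> = 1" using w_sum1[OF assms] by simp
  finally show ?thesis unfolding pp_def by (intro pmf_embed_pmf) (auto simp: w_nonneg)
qed

lemma set_pp: "finite J \<Longrightarrow> set_pmf (pp J) \<subseteq> TT J"
  using pmf_pp w_out by (auto simp: set_pmf_eq)

definition "PP J = distr (measure_pmf (pp J)) (PiM J (\<lambda>_. borel)) (\<lambda>t. restrict t J)"

lemma restrict_meas: "(\<lambda>t. restrict t J) \<in> measure_pmf p \<rightarrow>\<^sub>M PiM J (\<lambda>_. borel :: nat discrete measure)"
  by (simp add: measurable_pmf_measure1 space_PiM)

lemma sets_PP[simp]: "sets (PP J) = sets (PiM J (\<lambda>_. borel))"
  by (simp add: PP_def)

lemma TT_restrict: "t \<in> TT J \<Longrightarrow> restrict t J = t"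
  by (auto simp: TT_def PiE_def extensional_def fun_eq_iff)

lemma emeasure_PP:
  assumes "finite J" and that: "A \<in> sets (PiM J (\<lambda>_. borel))"
  shows "emeasure (PP J) A = ennreal (\<Sum>t\<in>TT J \<inter> A. w J t)"
proof -
  let ?S = "(\<lambda>t. restrict t J) -` A"
  have "emeasure (PP J) A = emeasure (measure_pmf (pp J)) ?S"
    unfolding PP_def using that by (subst emeasure_distr[OF restrict_meas]) auto
  also have "\<dots> = emeasure (measure_pmf (pp J)) (?S \<inter> set_pmf (pp J))"
    by (simp add: emeasure_Int_set_pmf)
  also have "?S \<inter> set_pmf (pp J) = (?S \<inter> TT J) \<inter> set_pmf (pp J)" using set_pp[OF assms(1)] by auto
  also have "emeasure (measure_pmf (pp J)) \<dots> = emeasure (measure_pmf (pp J)) (?S \<inter> TT J)"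
    by (simp add: emeasure_Int_set_pmf)
  also have "?S \<inter> TT J = TT J \<inter> A" using TT_restrict by auto
  also have "emeasure (measure_pmf (pp J)) (TT J \<inter> A) = ennreal (\<Sum>t\<in>TT J \<inter> A. pmf (pp J) t)"
    by (rule emeasure_measure_pmf_finite) (use assms finite_TT in auto)
  finally show ?thesis using pmf_pp[OF assms(1)] by simp
qed

lemma prob_PP: "prob_space (PP J)"
  unfolding PP_def by (rule prob_space.prob_space_distr[OF prob_space_measure_pmf restrict_meas])

lemma pj_restrict: "J \<subseteq> H \<Longrightarrow> restrict (pj H x) J = pj J x"
  by (auto simp: pj_def restrict_def fun_eq_iff)

lemma proj_fam: "projective_family UNIV PP (\<lambda>_. borel :: nat discrete measure)"
proof (unfold projective_family_def, intro conjI allI impI)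
  fix J H :: "nat set" assume JH: "J \<subseteq> H" "finite H"
  then have fJ: "finite J" using finite_subset by blast
  have rm: "(\<lambda>f. restrict f J) \<in> PP H \<rightarrow>\<^sub>M PiM J (\<lambda>_. borel :: nat discrete measure)"
    using measurable_cong_sets[OF sets_PP refl] measurable_restrict_subset[OF JH(1)] by blast
  show "PP J = distr (PP H) (PiM J (\<lambda>_. borel)) (\<lambda>f. restrict f J)"
  proof (rule measure_eqI)
    show "sets (PP J) = sets (distr (PP H) (PiM J (\<lambda>_. borel)) (\<lambda>f. restrict f J))" by simp
    fix A assume "A \<in> sets (PP J)"
    then have A: "A \<in> sets (PiM J (\<lambda>_. borel))" by simp
    let ?B = "(\<lambda>f. restrict f J) -` A \<inter> space (PP H)"
    have B: "?B \<in> sets (PiM H (\<lambda>_. borel))" using measurable_sets[OF rm A] by simp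
    have "emeasure (distr (PP H) (PiM J (\<lambda>_. borel)) (\<lambda>f. restrict f J)) A = emeasure (PP H) ?B"
      by (rule emeasure_distr[OF rm A])
    also have "\<dots> = ennreal (\<Sum>t\<in>TT H \<inter> ?B. w H t)" by (rule emeasure_PP[OF JH(2) B])
    also have "(\<Sum>t\<in>TT H \<inter> ?B. w H t) = (\<Sum>t\<in>TT J \<inter> A. w J t)"
    proof -
      have "{x. pj H x \<in> ?B} = {x. pj J x \<in> A}"
        using pj_restrict[OF JH(1)] pj_ext by (auto simp: space_PiM PP_def)
      then have "((\<lambda>k. measure (\<mu> k) {x. pj J x \<in> A}) \<longlongrightarrow> (\<Sum>t\<in>TT H \<inter> ?B. w H t)) \<omega>"
        using limA[OF JH(2), of ?B] by simp
      then show ?thesis using limA[OF fJ, of A] tendsto_unique[OF nb] by blast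
    qed
    finally have eq: "emeasure (distr (PP H) (PiM J (\<lambda>_. borel)) (\<lambda>f. restrict f J)) A = ennreal (\<Sum>t\<in>TT J \<inter> A. w J t)" .
    show "emeasure (PP J) A = emeasure (distr (PP H) (PiM J (\<lambda>_. borel)) (\<lambda>f. restrict f J)) A"
      unfolding eq by (rule emeasure_PP[OF fJ A])
  qed
next
  fix J :: "nat set" show "prob_space (PP J)" by (rule prob_PP)
qed

end

sublocale rz \<subseteq> PL: polish_projective UNIV PP
  unfolding polish_projective_def by (rule proj_fam)

context rz begin

lemma ALLS:
  assumes J: "finite J" and A: "A \<subseteq> space (PiM J (\<lambda>_. borel :: nat discrete measure))"
  shows "A \<in> sets (PiM J (\<lambda>_. borel :: nat discrete measure))"
proof -
  have sp: "space (PiM J (\<lambda>_. borel :: nat discrete measure)) = PiE J (\<lambda>_. UNIV)"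
    by (simp add: space_PiM)
  have cA: "countable A"
    using countable_subset[OF A[unfolded sp] countable_PiE[OF J]] by simp
  have sing: "{t} \<in> sets (PiM J (\<lambda>_. borel :: nat discrete measure))" if t: "t \<in> A" for t
  proof -
    have tE: "t \<in> PiE J (\<lambda>_. UNIV)" using t A sp by auto
    have "{t} = PiE J (\<lambda>m. {t m})"
      using tE by (auto simp: PiE_def extensional_def Pi_def fun_eq_iff) metis
    moreover have "PiE J (\<lambda>m. {t m}) \<in> sets (PiM J (\<lambda>_. borel :: nat discrete measure))"
      by (rule sets_PiM_I_finite[OF J]) (simp add: borel_open[OF open_discrete])
    ultimately show ?thesis by simp
  qed
  have "A = (\<Union>t\<in>A. {t})" by simp
  also have "\<dots> \<in> sets (PiM J (\<lambda>_. borel :: nat discrete measure))"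
    by (rule sets.countable_UN'[OF cA]) (use sing in auto)
  finally show ?thesis .
qed

lemma all_meas:
  assumes J: "finite J"
  shows "(F :: (nat \<Rightarrow> nat discrete) \<Rightarrow> 'b::topological_space) \<in> borel_measurable (PiM J (\<lambda>_. borel :: nat discrete measure))"
  by (rule measurableI) (auto intro!: ALLS[OF J])

lemma distr_lm:
  assumes J: "finite J"
  shows "distr PL.lim (PiM J (\<lambda>_. borel)) (\<lambda>s. restrict s J) = PP J"
proof (rule measure_eqI)
  have rm: "(\<lambda>s. restrict s J) \<in> PL.lim \<rightarrow>\<^sub>M PiM J (\<lambda>_. borel :: nat discrete measure)"
    using measurable_cong_sets[OF PL.sets_lim refl] measurable_restrict_subset[of J UNIV] by blast
  show "sets (distr PL.lim (PiM J (\<lambda>_. borel)) (\<lambda>s. restrict s J)) = sets (PP J)" by simp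
  fix A assume "A \<in> sets (distr PL.lim (PiM J (\<lambda>_. borel)) (\<lambda>s. restrict s J))"
  then have A: "A \<in> sets (PiM J (\<lambda>_. borel :: nat discrete measure))" by simp
  have "emeasure (distr PL.lim (PiM J (\<lambda>_. borel)) (\<lambda>s. restrict s J)) A
      = emeasure PL.lim ((\<lambda>s. restrict s J) -` A \<inter> space PL.lim)"
    by (rule emeasure_distr[OF rm A])
  also have "(\<lambda>s. restrict s J) -` A \<inter> space PL.lim = prod_emb UNIV (\<lambda>_. borel) J A"
    by (simp add: prod_emb_def space_PiM)
  also have "emeasure PL.lim \<dots> = emeasure (PP J) A"
    by (rule PL.emeasure_lim_emb) (use J A in auto)
  finally show "emeasure (distr PL.lim (PiM J (\<lambda>_. borel)) (\<lambda>s. restrict s J)) A = emeasure (PP J) A" .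
qed

lemma int_mu:
  fixes F :: "(nat \<Rightarrow> nat discrete) \<Rightarrow> real"
  assumes J: "finite J"
  shows "integral\<^sup>L (\<mu> k) (\<lambda>x. F (pj J x)) = (\<Sum>t\<in>TT J. F t * measure (\<mu> k) {x. pj J x = t})"
proof -
  interpret prob_space "\<mu> k" by (rule mu_prob)
  have eq: "F (pj J x) = (\<Sum>t\<in>TT J. F t * indicator {x. pj J x = t} x)" for x
  proof -
    have "(\<Sum>t\<in>TT J. F t * indicator {x. pj J x = t} x) = (\<Sum>t\<in>TT J. if t = pj J x then F t else 0)"
      by (intro sum.cong) (auto simp: indicator_def)
    also have "\<dots> = F (pj J x)" using pj_TT finite_TT[OF J] by (simp add: sum.delta')
    finally show ?thesis by simp
  qed
  have int: "integrable (\<mu> k) (\<lambda>x. F t * indicator {x. pj J x = t} x)" for t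
    by (intro integrable_mult_right integrable_real_indicator) (auto simp: pj_set_mu emeasure_finite top.not_eq_extremum[symmetric])
  have "integral\<^sup>L (\<mu> k) (\<lambda>x. F (pj J x)) = integral\<^sup>L (\<mu> k) (\<lambda>x. \<Sum>t\<in>TT J. F t * indicator {x. pj J x = t} x)"
    by (simp add: eq)
  also have "\<dots> = (\<Sum>t\<in>TT J. integral\<^sup>L (\<mu> k) (\<lambda>x. F t * indicator {x. pj J x = t} x))"
    by (rule Bochner_Integration.integral_sum) (rule int)
  also have "\<dots> = (\<Sum>t\<in>TT J. F t * measure (\<mu> k) {x. pj J x = t})"
    by (intro sum.cong refl) (simp add: pj_set_mu)
  finally show ?thesis .
qed

lemma int_lim:
  fixes F :: "(nat \<Rightarrow> nat discrete) \<Rightarrow> real"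
  assumes J: "finite J"
  shows "integral\<^sup>L PL.lim (\<lambda>s. F (restrict s J)) = (\<Sum>t\<in>TT J. F t * w J t)"
proof -
  have rm: "(\<lambda>s. restrict s J) \<in> PL.lim \<rightarrow>\<^sub>M PiM J (\<lambda>_. borel :: nat discrete measure)"
    using measurable_cong_sets[OF PL.sets_lim refl] measurable_restrict_subset[of J UNIV] by blast
  have "integral\<^sup>L PL.lim (\<lambda>s. F (restrict s J)) = integral\<^sup>L (distr PL.lim (PiM J (\<lambda>_. borel)) (\<lambda>s. restrict s J)) F"
    by (rule integral_distr[OF rm all_meas[OF J], symmetric])
  also have "\<dots> = integral\<^sup>L (PP J) F" by (simp add: distr_lm[OF J])
  also have "\<dots> = integral\<^sup>L (measure_pmf (pp J)) (\<lambda>t. F (restrict t J))"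
    unfolding PP_def by (rule integral_distr[OF restrict_meas all_meas[OF J]])
  also have "\<dots> = (\<Sum>t\<in>TT J. F (restrict t J) * pmf (pp J) t)"
    by (rule integral_measure_pmf_real) (use finite_TT[OF J] set_pp[OF J] in auto)
  also have "\<dots> = (\<Sum>t\<in>TT J. F t * w J t)"
    by (intro sum.cong refl) (simp add: TT_restrict pmf_pp[OF J])
  finally show ?thesis .
qed

lemma GIL:
  fixes F :: "(nat \<Rightarrow> nat discrete) \<Rightarrow> real"
  assumes J: "finite J"
  shows "((\<lambda>k. integral\<^sup>L (\<mu> k) (\<lambda>x. F (pj J x))) \<longlongrightarrow> integral\<^sup>L PL.lim (\<lambda>s. F (restrict s J))) \<omega>"
proof -
  have e1: "integral\<^sup>L PL.lim (\<lambda>s. F (restrict s J)) = (\<Sum>t\<in>TT J. F t * w J t)" by (rule int_lim[OF J])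
  have e2: "\<And>k. integral\<^sup>L (\<mu> k) (\<lambda>x. F (pj J x)) = (\<Sum>t\<in>TT J. F t * measure (\<mu> k) {x. pj J x = t})"
    by (rule int_mu[OF J])
  show ?thesis unfolding e1 e2 by (intro tendsto_sum tendsto_mult_left w_tend)
qed

end

lemma int_close:
  fixes g h :: "_ \<Rightarrow> real"
  assumes P: "prob_space M" and ig: "integrable M g" and ih: "integrable M h"
    and ae: "AE x in M. \<bar>g x - h x\<bar> \<le> c"
  shows "\<bar>integral\<^sup>L M g - integral\<^sup>L M h\<bar> \<le> c"
proof -
  interpret prob_space M by (rule P)
  have "integral\<^sup>L M g - integral\<^sup>L M h = integral\<^sup>L M (\<lambda>x. g x - h x)"
    using Bochner_Integration.integral_diff[OF ig ih] by simp
  also have "\<bar>\<dots>\<bar> \<le> integral\<^sup>L M (\<lambda>x. \<bar>g x - h x\<bar>)" by (rule integral_abs_bound)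
  also have "\<dots> \<le> integral\<^sup>L M (\<lambda>x. c)"
    by (rule integral_mono_AE) (use ig ih ae in auto)
  also have "\<dots> = c" by (simp add: prob_space)
  finally show ?thesis .
qed

lemma cont_bnd:
  fixes f :: "'a::metric_space \<Rightarrow> 'b::real_normed_vector"
  assumes "compact (UNIV::'a set)" "continuous_on UNIV f"
  shows "\<exists>B. \<forall>x. norm (f x) \<le> B"
proof -
  have "bounded (f ` UNIV)" by (rule compact_imp_bounded[OF compact_continuous_image[OF assms(2,1)]])
  then show ?thesis unfolding bounded_iff by blast
qed

lemma disc_meas: "(g :: nat discrete \<Rightarrow> 'b::topological_space) \<in> borel \<rightarrow>\<^sub>M borel"
  by (rule measurableI) (auto intro: borel_open[OF open_discrete])

context rz begin

lemma mu_one[simp]: "measure (\<mu> k) (space (\<mu> k)) = 1"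
  using prob_space.prob_space[OF mu_prob] by simp

lemma space_lim_UNIV[simp]: "space (PiM UNIV (\<lambda>_. borel :: nat discrete measure)) = UNIV"
  by (auto simp: space_PiM PiE_def extensional_def)

definition "pm m s = cs m ! of_discrete (s m)"

lemma pm_io: "dist (pm m (io x)) x < (1/2)^m"
  using dg by (simp add: pm_def io_def)

lemma pm_meas: "pm m \<in> PL.lim \<rightarrow>\<^sub>M borel"
proof -
  have "(\<lambda>s. s m) \<in> PL.lim \<rightarrow>\<^sub>M (borel :: nat discrete measure)"
    using measurable_cong_sets[OF PL.sets_lim refl] measurable_component_singleton[of m UNIV] by blast
  from measurable_comp[OF this disc_meas[of "\<lambda>d. cs m ! of_discrete d"]]
  have "(\<lambda>s. cs m ! of_discrete (s m)) \<in> PL.lim \<rightarrow>\<^sub>M borel" by (simp add: o_def)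
  moreover have "pm m = (\<lambda>s. cs m ! of_discrete (s m))" by (simp add: fun_eq_iff pm_def)
  ultimately show ?thesis by simp
qed

definition "good s \<longleftrightarrow> (\<forall>m. dist (pm m s) (pm (Suc m) s) < 2 * (1/2)^m)"

lemma Gm_meas: "{s. dist (pm m s) (pm (Suc m) s) < 2 * (1/2)^m} \<in> sets PL.lim"
proof -
  let ?J = "{m, Suc m}"
  let ?A = "{t \<in> space (PiM ?J (\<lambda>_. borel :: nat discrete measure)). dist (pm m t) (pm (Suc m) t) < 2 * (1/2)^m}"
  have rm: "(\<lambda>s. restrict s ?J) \<in> PL.lim \<rightarrow>\<^sub>M PiM ?J (\<lambda>_. borel :: nat discrete measure)"
    using measurable_cong_sets[OF PL.sets_lim refl] measurable_restrict_subset[of ?J UNIV] by blast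
  have A: "?A \<in> sets (PiM ?J (\<lambda>_. borel :: nat discrete measure))" by (rule ALLS) auto
  have "(\<lambda>s. restrict s ?J) -` ?A \<inter> space PL.lim = {s. dist (pm m s) (pm (Suc m) s) < 2 * (1/2)^m}"
    by (auto simp: pm_def space_PiM)
  then show ?thesis using measurable_sets[OF rm A] by simp
qed

lemma G_meas: "{s. good s} \<in> sets PL.lim"
proof -
  have "{s. good s} = (\<Inter>m. {s. dist (pm m s) (pm (Suc m) s) < 2 * (1/2)^m})"
    by (auto simp: good_def)
  then show ?thesis using Gm_meas by auto
qed

lemma AE_Gm: "AE s in PL.lim. dist (pm m s) (pm (Suc m) s) < 2 * (1/2)^m"
proof -
  let ?J = "{m, Suc m}"
  let ?A = "{t :: nat \<Rightarrow> nat discrete. dist (pm m t) (pm (Suc m) t) < 2 * (1/2)^m}"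
  define F where "F = (indicator ?A :: (nat \<Rightarrow> nat discrete) \<Rightarrow> real)"
  have "F (pj ?J x) = 1" for x
  proof -
    have "dist (pm m (io x)) (pm (Suc m) (io x)) \<le> dist (pm m (io x)) x + dist (pm (Suc m) (io x)) x"
      by (rule dist_triangle2)
    also have "\<dots> < (1/2)^m + (1/2)^Suc m" using pm_io by (intro add_strict_mono)
    also have "\<dots> \<le> 2 * (1/2)^m" by simp
    finally show ?thesis by (simp add: F_def pj_def pm_def)
  qed
  then have "((\<lambda>k. 1) \<longlongrightarrow> integral\<^sup>L PL.lim (\<lambda>s. F (restrict s ?J))) \<omega>"
    using GIL[of ?J F] by simp
  then have i1: "integral\<^sup>L PL.lim (\<lambda>s. F (restrict s ?J)) = 1"
    using tendsto_unique[OF nb] tendsto_const by metis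
  have "(\<lambda>s. F (restrict s ?J)) = indicator {s. dist (pm m s) (pm (Suc m) s) < 2 * (1/2)^m}"
    by (auto simp: F_def pm_def indicator_def fun_eq_iff)
  then have "measure PL.lim {s. dist (pm m s) (pm (Suc m) s) < 2 * (1/2)^m} = 1"
    using i1 by simp
  then have "AE s in PL.lim. s \<in> {s. dist (pm m s) (pm (Suc m) s) < 2 * (1/2)^m}"
    using PL.P.AE_in_set_eq_1[OF Gm_meas[of m]] by blast
  then show ?thesis by simp
qed

lemma AE_good: "AE s in PL.lim. good s"
  unfolding good_def using AE_Gm by (simp add: AE_all_countable)

lemma tele:
  assumes g: "good s" and mn: "m \<le> n"
  shows "dist (pm m s) (pm n s) \<le> 4 * (1/2)^m - 4 * (1/2)^n"
  using mn
proof (induction n rule: dec_induct)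
  case base then show ?case by simp
next
  case (step n)
  have "dist (pm m s) (pm (Suc n) s) \<le> dist (pm m s) (pm n s) + dist (pm n s) (pm (Suc n) s)"
    by (rule dist_triangle)
  also have "\<dots> \<le> 4 * (1/2)^m - 4 * (1/2)^n + 2 * (1/2)^n"
    using step.IH g unfolding good_def by (intro add_mono) (auto intro: less_imp_le)
  also have "\<dots> = 4 * (1/2)^m - 4 * (1/2)^Suc n" by simp
  finally show ?case .
qed

lemma good_conv:
  assumes g: "good s"
  shows "convergent (\<lambda>m. pm m s)"
proof -
  have "Cauchy (\<lambda>m. pm m s)"
  proof (rule metric_CauchyI)
    fix e :: real assume e: "e > 0"
    obtain M where M: "(1/2)^M < e / 8"
      using real_arch_pow_inv[of "e/8" "1/2"] e by auto
    show "\<exists>M. \<forall>m\<ge>M. \<forall>n\<ge>M. dist (pm m s) (pm n s) < e"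
    proof (intro exI allI impI)
      fix m n assume mn: "M \<le> m" "M \<le> n"
      have b: "dist (pm M s) (pm k s) < e / 2" if "M \<le> k" for k
      proof -
        have "dist (pm M s) (pm k s) \<le> 4 * (1/2)^M - 4 * (1/2)^k" by (rule tele[OF g that])
        also have "\<dots> \<le> 4 * (1/2)^M" by simp
        also have "\<dots> < e / 2" using M by simp
        finally show ?thesis .
      qed
      have "dist (pm m s) (pm n s) \<le> dist (pm M s) (pm m s) + dist (pm M s) (pm n s)"
        by (rule dist_triangle3)
      also have "\<dots> < e / 2 + e / 2" using b mn by (intro add_strict_mono)
      finally show "dist (pm m s) (pm n s) < e" by simp
    qed
  qed
  then show ?thesis using compact_imp_complete[OF cpt] unfolding complete_def
    by (metis UNIV_I convergent_def)
qed

end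

context rz begin

definition "pl s = (if good s then lim (\<lambda>m. pm m s) else undefined)"

lemma pl_tend: "good s \<Longrightarrow> (\<lambda>m. pm m s) \<longlonglongrightarrow> pl s"
  using good_conv by (simp add: pl_def convergent_LIMSEQ_iff)

lemma pl_close:
  assumes g: "good s"
  shows "dist (pl s) (pm m s) \<le> 4 * (1/2)^m"
proof -
  have "(\<lambda>n. dist (pm m s) (pm n s)) \<longlonglongrightarrow> dist (pm m s) (pl s)"
    by (intro tendsto_dist tendsto_const pl_tend[OF g])
  moreover have "eventually (\<lambda>n. dist (pm m s) (pm n s) \<le> 4 * (1/2)^m) sequentially"
  proof (rule eventually_sequentiallyI[of m])
    fix n assume "m \<le> n"
    then have "dist (pm m s) (pm n s) \<le> 4 * (1/2)^m - 4 * (1/2)^n" by (rule tele[OF g])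
    also have "\<dots> \<le> 4 * (1/2)^m" by simp
    finally show "dist (pm m s) (pm n s) \<le> 4 * (1/2)^m" .
  qed
  ultimately have "dist (pm m s) (pl s) \<le> 4 * (1/2)^m"
    by (rule tendsto_upperbound) simp
  then show ?thesis by (simp add: dist_commute)
qed

lemma pl_meas: "pl \<in> PL.lim \<rightarrow>\<^sub>M borel"
proof (rule borel_measurable_LIMSEQ_metric)
  fix i
  show "(\<lambda>s. if s \<in> {s. good s} then pm i s else undefined) \<in> PL.lim \<rightarrow>\<^sub>M borel"
    by (rule measurable_If_set[OF pm_meas measurable_const]) (use G_meas in auto)
next
  fix s
  show "(\<lambda>i. if s \<in> {s. good s} then pm i s else undefined) \<longlonglongrightarrow> pl s"
    using pl_tend by (cases "good s") (auto simp: pl_def)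
qed

definition "nu = distr PL.lim borel pl"

lemma nu_bp: "borel_prob nu"
  unfolding borel_prob_def nu_def
  using PL.P.prob_space_distr[OF pl_meas] by simp

lemma dgf_meas: "(\<lambda>x. g (dg m x) :: real) \<in> borel_measurable (\<mu> k)"
proof -
  have "(\<lambda>x. g (dg m x)) \<in> borel_measurable borel"
    by (rule measurable_compose[OF dg_meas]) simp
  then show ?thesis using measurable_cong_sets[OF mu_sets refl] by blast
qed

lemma main_tend:
  fixes f :: "'a \<Rightarrow> real"
  assumes fc: "continuous_on UNIV f"
  shows "((\<lambda>k. integral\<^sup>L (\<mu> k) f) \<longlongrightarrow> integral\<^sup>L nu f) \<omega>"
proof -
  obtain B where B: "\<And>x. norm (f x) \<le> B" using cont_bnd[OF cpt fc] by blast
  have uc: "uniformly_continuous_on UNIV f" by (rule compact_uniformly_continuous[OF fc cpt])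
  have fm: "f \<in> borel_measurable borel" by (rule borel_measurable_continuous_onI[OF fc])
  have inu: "integral\<^sup>L nu f = integral\<^sup>L PL.lim (\<lambda>s. f (pl s))"
    unfolding nu_def by (rule integral_distr[OF pl_meas fm])
  show ?thesis unfolding inu
  proof (rule tendstoI)
    fix e :: real assume e: "e > 0"
    have e4: "e / 4 > 0" using e by simp
    then obtain d where d0: "d > 0" and d1: "\<forall>x\<in>UNIV. \<forall>x'\<in>UNIV. dist x' x < d \<longrightarrow> dist (f x') (f x) < e / 4"
      using uc unfolding uniformly_continuous_on_def by blast
    have d: "d > 0" "\<And>x y. dist x y < d \<Longrightarrow> dist (f x) (f y) < e / 4"
      using d0 d1 by auto
    obtain m where m: "(1/2)^m < d / 4"
      using real_arch_pow_inv[of "d/4" "1/2"] d by auto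
    define F where "F t = f (cs m ! of_discrete (t m))" for t :: "nat \<Rightarrow> nat discrete"
    have F1: "F (pj {m} x) = f (pm m (io x))" for x by (simp add: F_def pj_def pm_def)
    have F2: "F (restrict s {m}) = f (pm m s)" for s by (simp add: F_def pm_def)
    have "((\<lambda>k. integral\<^sup>L (\<mu> k) (\<lambda>x. F (pj {m} x))) \<longlongrightarrow> integral\<^sup>L PL.lim (\<lambda>s. F (restrict s {m}))) \<omega>"
      by (rule GIL) simp
    then have T: "((\<lambda>k. integral\<^sup>L (\<mu> k) (\<lambda>x. f (pm m (io x)))) \<longlongrightarrow> integral\<^sup>L PL.lim (\<lambda>s. f (pm m s))) \<omega>"
      unfolding F1 F2 .
    have ev: "eventually (\<lambda>k. dist (integral\<^sup>L (\<mu> k) (\<lambda>x. f (pm m (io x)))) (integral\<^sup>L PL.lim (\<lambda>s. f (pm m s))) < e / 4) \<omega>"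
      using tendstoD[OF T e4] by simp
    have b: "\<bar>integral\<^sup>L PL.lim (\<lambda>s. f (pl s)) - integral\<^sup>L PL.lim (\<lambda>s. f (pm m s))\<bar> \<le> e / 4"
    proof (rule int_close[OF PL.P.prob_space_axioms])
      show "integrable PL.lim (\<lambda>s. f (pl s))"
        by (rule PL.P.integrable_const_bound[where B=B]) (use B measurable_compose[OF pl_meas fm] in auto)
      show "integrable PL.lim (\<lambda>s. f (pm m s))"
        by (rule PL.P.integrable_const_bound[where B=B]) (use B measurable_compose[OF pm_meas fm] in auto)
      show "AE s in PL.lim. \<bar>f (pl s) - f (pm m s)\<bar> \<le> e / 4"
        using AE_good
      proof (rule eventually_mono)
        fix s assume g: "good s"
        have "dist (pl s) (pm m s) < d" using pl_close[OF g, of m] m by simp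
        then have "dist (f (pl s)) (f (pm m s)) < e / 4" using d(2) by blast
        then show "\<bar>f (pl s) - f (pm m s)\<bar> \<le> e / 4" by (simp add: dist_real_def)
      qed
    qed
    have a: "\<bar>integral\<^sup>L (\<mu> k) f - integral\<^sup>L (\<mu> k) (\<lambda>x. f (pm m (io x)))\<bar> \<le> e / 4" for k
    proof (rule int_close[OF mu_prob])
      interpret prob_space "\<mu> k" by (rule mu_prob)
      have fmk: "f \<in> borel_measurable (\<mu> k)" using bp bp_meas fc by blast
      show "integrable (\<mu> k) f"
        by (rule integrable_const_bound[where B=B]) (use B fmk in auto)
      have "(\<lambda>x. f (cs m ! dg m x)) \<in> borel_measurable (\<mu> k)" by (rule dgf_meas)
      then have "(\<lambda>x. f (pm m (io x))) \<in> borel_measurable (\<mu> k)" by (simp add: pm_def io_def)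
      then show "integrable (\<mu> k) (\<lambda>x. f (pm m (io x)))"
        by (intro integrable_const_bound[where B=B]) (use B in auto)
      show "AE x in \<mu> k. \<bar>f x - f (pm m (io x))\<bar> \<le> e / 4"
      proof (rule AE_I2)
        fix x
        have "(0::real) < (1/2)^m" by simp
        then have "dist (pm m (io x)) x < d" using pm_io[of m x] m by linarith
        then have "dist (f (pm m (io x))) (f x) < e / 4" using d(2) by blast
        then show "\<bar>f x - f (pm m (io x))\<bar> \<le> e / 4" by (simp add: dist_real_def abs_minus_commute)
      qed
    qed
    show "eventually (\<lambda>k. dist (integral\<^sup>L (\<mu> k) f) (integral\<^sup>L PL.lim (\<lambda>s. f (pl s))) < e) \<omega>"
      using ev
    proof (rule eventually_mono)
      fix k assume "dist (integral\<^sup>L (\<mu> k) (\<lambda>x. f (pm m (io x)))) (integral\<^sup>L PL.lim (\<lambda>s. f (pm m s))) < e / 4"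
      then show "dist (integral\<^sup>L (\<mu> k) f) (integral\<^sup>L PL.lim (\<lambda>s. f (pl s))) < e"
        using a[of k] b e unfolding dist_real_def by linarith
    qed
  qed
qed

end

lemma cover_lists:
  assumes cpt: "compact (UNIV::'a::metric_space set)"
  shows "\<exists>cs::nat \<Rightarrow> 'a list. \<forall>m x. \<exists>i<length (cs m). dist (cs m ! i) x < (1/2::real)^m"
proof -
  have "\<exists>xs::'a list. \<forall>x. \<exists>i<length xs. dist (xs ! i) x < (1/2::real)^m" for m :: nat
  proof -
    have r: "(1/2::real)^m > 0" by simp
    have tb: "\<forall>\<epsilon>>0. \<exists>k. finite k \<and> (UNIV::'a set) \<subseteq> (\<Union>x\<in>k. ball x \<epsilon>)"
      using iffD1[OF compact_eq_totally_bounded cpt] by (rule conjunct2)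
    obtain k where k: "finite k" "(UNIV::'a set) \<subseteq> (\<Union>x\<in>k. ball x ((1/2)^m))"
      using tb r by blast
    obtain xs where xs: "set xs = k" using finite_list[OF k(1)] by blast
    show ?thesis
    proof (rule exI[of _ xs], rule allI)
      fix x :: 'a
      have "x \<in> (\<Union>x\<in>k. ball x ((1/2)^m))" using k(2) by blast
      then obtain c where c: "c \<in> k" "dist c x < (1/2)^m" by (auto simp: mem_ball)
      have "c \<in> set xs" using xs c(1) by simp
      then obtain i where "i < length xs" "xs ! i = c" by (metis in_set_conv_nth)
      then show "\<exists>i<length xs. dist (xs ! i) x < (1/2)^m" using c by blast
    qed
  qed
  then show ?thesis by metis
qed
lemma riesz_limit:
  fixes \<mu> :: "nat \<Rightarrow> 'a::metric_space measure"
  assumes cpt: "compact (UNIV::'a set)" and bp: "\<And>k. borel_prob (\<mu> k)" and fu: "free_ultrafilter \<omega>"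
  shows "\<exists>\<nu>. borel_prob \<nu> \<and> (\<forall>f::'a\<Rightarrow>real. continuous_on UNIV f \<longrightarrow> ((\<lambda>k. integral\<^sup>L (\<mu> k) f) \<longlongrightarrow> integral\<^sup>L \<nu> f) \<omega>)"
proof -
  obtain cs :: "nat \<Rightarrow> 'a list" where cs: "\<And>m x. \<exists>i<length (cs m). dist (cs m ! i) x < (1/2)^m"
    using cover_lists[OF cpt] by blast
  have "rz \<mu> \<omega> cs" unfolding rz_def using cpt bp fu cs by blast
  then interpret rz \<mu> \<omega> cs .
  show ?thesis
    by (rule exI[of _ nu]) (use nu_bp main_tend in blast)
qed

lemma bp_int:
  fixes f :: "'a::metric_space \<Rightarrow> 'b::{banach, second_countable_topology}"
  assumes cpt: "compact (UNIV :: 'a set)" and bp: "borel_prob M" and fc: "continuous_on UNIV f"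
  shows "integrable M f"
proof -
  interpret prob_space M using bp bp_prob by blast
  obtain B where B: "\<And>x. norm (f x) \<le> B" using cont_bnd[OF cpt fc] by blast
  show ?thesis by (rule integrable_const_bound[where B=B]) (use B bp_meas[OF bp fc] in auto)
qed

lemma complex_tend:
  fixes \<mu> :: "nat \<Rightarrow> 'a::metric_space measure" and f :: "'a \<Rightarrow> complex"
  assumes rt: "\<forall>g::'a\<Rightarrow>real. continuous_on UNIV g \<longrightarrow> ((\<lambda>k. integral\<^sup>L (\<mu> k) g) \<longlongrightarrow> integral\<^sup>L \<nu> g) \<omega>"
    and fc: "continuous_on UNIV f" and cpt: "compact (UNIV :: 'a set)"
    and bpm: "\<And>k. borel_prob (\<mu> k)" and bpn: "borel_prob \<nu>"
  shows "((\<lambda>k. integral\<^sup>L (\<mu> k) f) \<longlongrightarrow> integral\<^sup>L \<nu> f) \<omega>"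
proof -
  have cr: "continuous_on UNIV (\<lambda>x. Re (f x))" by (intro continuous_intros fc)
  have ci: "continuous_on UNIV (\<lambda>x. Im (f x))" by (intro continuous_intros fc)
  have im: "integrable (\<mu> k) f" for k by (rule bp_int[OF cpt bpm fc])
  have inu: "integrable \<nu> f" by (rule bp_int[OF cpt bpn fc])
  have "((\<lambda>k. Complex (integral\<^sup>L (\<mu> k) (\<lambda>x. Re (f x))) (integral\<^sup>L (\<mu> k) (\<lambda>x. Im (f x))))
      \<longlongrightarrow> Complex (integral\<^sup>L \<nu> (\<lambda>x. Re (f x))) (integral\<^sup>L \<nu> (\<lambda>x. Im (f x)))) \<omega>"
    by (intro tendsto_Complex) (use rt cr ci in blast)+
  then show ?thesis using im inu by (simp add: integral_Re integral_Im)
qed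

lemma closed_limit_in:
  fixes \<Delta> :: "'a::metric_space measure set" and \<mu> :: "nat \<Rightarrow> 'a measure"
  assumes cpt: "compact (UNIV :: 'a set)" and bpD: "\<forall>\<mu>\<in>\<Delta>. borel_prob \<mu>"
    and wsc: "weak_star_closed \<Delta>" and fu: "free_ultrafilter \<omega>" and mu: "\<And>k. \<mu> k \<in> \<Delta>"
  shows "\<exists>\<nu>\<in>\<Delta>. \<forall>g::'a\<Rightarrow>real. continuous_on UNIV g \<longrightarrow> ((\<lambda>k. integral\<^sup>L (\<mu> k) g) \<longlongrightarrow> integral\<^sup>L \<nu> g) \<omega>"
proof -
  have bpm: "\<And>k. borel_prob (\<mu> k)" using mu bpD by blast
  from riesz_limit[OF cpt bpm fu] obtain \<nu> where nu: "borel_prob \<nu> \<and>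
     (\<forall>g::'a\<Rightarrow>real. continuous_on UNIV g \<longrightarrow> ((\<lambda>k. integral\<^sup>L (\<mu> k) g) \<longlongrightarrow> integral\<^sup>L \<nu> g) \<omega>)" ..
  have bn: "borel_prob \<nu>" using nu by (rule conjunct1)
  have rt: "\<forall>g::'a\<Rightarrow>real. continuous_on UNIV g \<longrightarrow> ((\<lambda>k. integral\<^sup>L (\<mu> k) g) \<longlongrightarrow> integral\<^sup>L \<nu> g) \<omega>"
    using nu by (rule conjunct2)
  have L: "\<exists>\<nu>'\<in>\<Delta>. \<forall>f\<in>F. cmod (integral\<^sup>L \<nu> f - integral\<^sup>L \<nu>' f) < \<epsilon>"
    if F1: "finite F" and F2: "\<forall>f\<in>F. continuous_on UNIV (f :: 'a \<Rightarrow> complex)" and F3: "\<epsilon> > 0" for F \<epsilon>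
  proof -
    have "\<forall>f\<in>F. eventually (\<lambda>k. dist (integral\<^sup>L (\<mu> k) f) (integral\<^sup>L \<nu> f) < \<epsilon>) \<omega>"
    proof
      fix f assume "f \<in> F"
      then have "continuous_on UNIV f" using F2 by blast
      from tendstoD[OF complex_tend[OF rt this cpt bpm bn] F3]
      show "eventually (\<lambda>k. dist (integral\<^sup>L (\<mu> k) f) (integral\<^sup>L \<nu> f) < \<epsilon>) \<omega>" .
    qed
    then have "eventually (\<lambda>k. \<forall>f\<in>F. dist (integral\<^sup>L (\<mu> k) f) (integral\<^sup>L \<nu> f) < \<epsilon>) \<omega>"
      by (rule eventually_ball_finite[OF F1])
    then have "\<omega> = bot \<or> (\<exists>k. \<forall>f\<in>F. dist (integral\<^sup>L (\<mu> k) f) (integral\<^sup>L \<nu> f) < \<epsilon>)"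
      by (rule eventually_happens)
    then obtain k where k: "\<forall>f\<in>F. dist (integral\<^sup>L (\<mu> k) f) (integral\<^sup>L \<nu> f) < \<epsilon>"
      using fu_nb[OF fu] by blast
    show ?thesis
    proof (rule bexI[of _ "\<mu> k"])
      show "\<mu> k \<in> \<Delta>" by (rule mu)
      show "\<forall>f\<in>F. cmod (integral\<^sup>L \<nu> f - integral\<^sup>L (\<mu> k) f) < \<epsilon>"
      proof
        fix f assume "f \<in> F"
        then have "dist (integral\<^sup>L (\<mu> k) f) (integral\<^sup>L \<nu> f) < \<epsilon>" using k by blast
        then have "dist (integral\<^sup>L \<nu> f) (integral\<^sup>L (\<mu> k) f) < \<epsilon>" by (simp only: dist_commute)
        then show "cmod (integral\<^sup>L \<nu> f - integral\<^sup>L (\<mu> k) f) < \<epsilon>" by (simp only: dist_norm)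
      qed
    qed
  qed
  have H: "\<forall>F \<epsilon>. finite F \<and> (\<forall>f\<in>F. continuous_on UNIV (f :: 'a \<Rightarrow> complex)) \<and> \<epsilon> > 0 \<longrightarrow>
           (\<exists>\<nu>'\<in>\<Delta>. \<forall>f\<in>F. cmod (integral\<^sup>L \<nu> f - integral\<^sup>L \<nu>' f) < \<epsilon>)"
    by (intro allI impI, elim conjE, rule L, assumption+)
  have "\<nu> \<in> \<Delta>" using wsc[unfolded weak_star_closed_def, rule_format, OF conjI[OF bn H]] .
  then show ?thesis using rt by blast
qed

lemma meas_open_set: "borel_prob M \<Longrightarrow> continuous_on UNIV (g::'a::metric_space \<Rightarrow> real) \<Longrightarrow> {x. g x < c} \<in> sets M"
proof -
  assume bp: "borel_prob M" and gc: "continuous_on UNIV g"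
  have "g \<in> borel_measurable M" by (rule bp_meas[OF bp gc])
  then have "{x \<in> space M. g x < c} \<in> sets M" by measurable
  then show ?thesis using bp_space[OF bp] by simp
qed

lemma meas_eq_set: "borel_prob M \<Longrightarrow> continuous_on UNIV (g::'a::metric_space \<Rightarrow> real) \<Longrightarrow> {x. g x = c} \<in> sets M"
proof -
  assume bp: "borel_prob M" and gc: "continuous_on UNIV g"
  have "g \<in> borel_measurable M" by (rule bp_meas[OF bp gc])
  then have "{x \<in> space M. g x = c} \<in> sets M" by measurable
  then show ?thesis using bp_space[OF bp] by simp
qed

lemma unif_small:
  fixes \<Delta> :: "'a::metric_space measure set" and g :: "'a \<Rightarrow> real"
  assumes cpt: "compact (UNIV :: 'a set)" and bpD: "\<forall>\<mu>\<in>\<Delta>. borel_prob \<mu>"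
    and wsc: "weak_star_closed \<Delta>" and fu: "free_ultrafilter \<omega>"
    and gc: "continuous_on UNIV g" and g0: "\<And>x. 0 \<le> g x"
    and null: "\<forall>\<mu>\<in>\<Delta>. measure \<mu> {x. g x = 0} = 0" and eta: "\<eta> > 0"
  shows "\<exists>\<kappa>>0. \<forall>\<mu>\<in>\<Delta>. measure \<mu> {x. g x < \<kappa>} \<le> \<eta>"
proof (rule ccontr)
  assume na: "\<not> (\<exists>\<kappa>>0. \<forall>\<mu>\<in>\<Delta>. measure \<mu> {x. g x < \<kappa>} \<le> \<eta>)"
  have "\<forall>k::nat. \<exists>m. m \<in> \<Delta> \<and> measure m {x. g x < 1 / (real k + 1)} > \<eta>"
  proof
    fix k :: nat
    have pos: "1 / (real k + 1) > 0" by simp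
    have na': "\<forall>\<kappa>>0. \<exists>m\<in>\<Delta>. \<eta> < measure m {x. g x < \<kappa>}" using na by (auto simp: not_le)
    obtain m where "m \<in> \<Delta>" "\<eta> < measure m {x. g x < 1 / (real k + 1)}" using na'[rule_format, OF pos] by blast
    then show "\<exists>m. m \<in> \<Delta> \<and> measure m {x. g x < 1 / (real k + 1)} > \<eta>" by blast
  qed
  then have "\<exists>\<mu>. \<forall>k::nat. \<mu> k \<in> \<Delta> \<and> measure (\<mu> k) {x. g x < 1 / (real k + 1)} > \<eta>" by (rule choice)
  then obtain \<mu> where mu: "\<And>k. \<mu> k \<in> \<Delta>" and mb: "\<And>k. measure (\<mu> k) {x. g x < 1 / (real k + 1)} > \<eta>"
    by blast
  have bpm: "\<And>k. borel_prob (\<mu> k)" using mu bpD by blast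
  from closed_limit_in[OF cpt bpD wsc fu mu]
  have "\<exists>\<nu>. \<nu> \<in> \<Delta> \<and> (\<forall>h::'a\<Rightarrow>real. continuous_on UNIV h \<longrightarrow> ((\<lambda>k. integral\<^sup>L (\<mu> k) h) \<longlongrightarrow> integral\<^sup>L \<nu> h) \<omega>)"
    by (simp only: Bex_def)
  then obtain \<nu> where nu: "\<nu> \<in> \<Delta> \<and> (\<forall>h::'a\<Rightarrow>real. continuous_on UNIV h \<longrightarrow> ((\<lambda>k. integral\<^sup>L (\<mu> k) h) \<longlongrightarrow> integral\<^sup>L \<nu> h) \<omega>)" ..
  have nuD: "\<nu> \<in> \<Delta>" using nu by (rule conjunct1)
  have rt: "\<forall>h::'a\<Rightarrow>real. continuous_on UNIV h \<longrightarrow> ((\<lambda>k. integral\<^sup>L (\<mu> k) h) \<longlongrightarrow> integral\<^sup>L \<nu> h) \<omega>"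
    using nu by (rule conjunct2)
  have bn: "borel_prob \<nu>" using nuD bpD by blast
  interpret N: prob_space \<nu> using bn bp_prob by blast
  define h where "h j x = min 1 (max 0 (2 - (real j + 1) * g x))" for j :: nat and x
  have hc: "continuous_on UNIV (h j)" for j unfolding h_def by (intro continuous_intros gc)
  have h01: "0 \<le> h j x" "h j x \<le> 1" for j x by (auto simp: h_def)
  have hge: "integral\<^sup>L (\<mu> k) (h j) > \<eta>" if jk: "j \<le> k" for j k
  proof -
    interpret M: prob_space "\<mu> k" using bpm bp_prob by blast
    let ?S = "{x. g x < 1 / (real k + 1)}"
    have S: "?S \<in> sets (\<mu> k)" by (rule meas_open_set[OF bpm gc])
    have ind: "indicator ?S x \<le> h j x" for x
    proof (cases "x \<in> ?S")
      case True
      then have "g x < 1 / (real k + 1)" by simp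
      moreover have "1 / (real k + 1) \<le> 1 / (real j + 1)" using jk by (simp add: frac_le)
      ultimately have "g x < 1 / (real j + 1)" by linarith
      then have "g x * (real j + 1) < 1" using pos_less_divide_eq[of "real j + 1" "g x" 1] by simp
      then have "(real j + 1) * g x < 1" by (simp add: mult.commute)
      then show ?thesis by (simp add: h_def)
    next
      case False then show ?thesis using h01 by simp
    qed
    have "measure (\<mu> k) ?S = integral\<^sup>L (\<mu> k) (indicator ?S)"
      using bp_space[OF bpm] by simp
    also have "\<dots> \<le> integral\<^sup>L (\<mu> k) (h j)"
      by (rule integral_mono) (use S ind bp_int[OF cpt bpm hc] in \<open>auto simp: M.emeasure_finite top.not_eq_extremum[symmetric]\<close>)
    finally show ?thesis using mb[of k] by simp
  qed
  have hnu: "integral\<^sup>L \<nu> (h j) \<ge> \<eta>" for j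
  proof -
    have "eventually (\<lambda>k. j \<le> k) sequentially" by (rule eventually_ge_at_top)
    then have "eventually (\<lambda>k. j \<le> k) \<omega>" using fu_seq[OF fu] by (rule filter_leD[rotated])
    then have ev: "eventually (\<lambda>k. \<eta> \<le> integral\<^sup>L (\<mu> k) (h j)) \<omega>"
      by (rule eventually_mono) (use hge in \<open>auto intro: less_imp_le\<close>)
    have "((\<lambda>k. integral\<^sup>L (\<mu> k) (h j)) \<longlongrightarrow> integral\<^sup>L \<nu> (h j)) \<omega>" using rt hc by simp
    then show ?thesis by (rule tendsto_lowerbound[OF _ ev fu_nb[OF fu]])
  qed
  let ?Z = "{x. g x = 0}"
  have lim: "(\<lambda>j. integral\<^sup>L \<nu> (h j)) \<longlonglongrightarrow> integral\<^sup>L \<nu> (indicator ?Z)"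
  proof (rule integral_dominated_convergence[where w="\<lambda>_. 1"])
    show "indicator ?Z \<in> borel_measurable \<nu>"
      using meas_eq_set[OF bn gc] by simp
    show "h j \<in> borel_measurable \<nu>" for j by (rule bp_meas[OF bn hc])
    show "integrable \<nu> (\<lambda>_. 1::real)" by simp
    show "AE x in \<nu>. (\<lambda>j. h j x) \<longlonglongrightarrow> indicator ?Z x"
    proof (rule AE_I2)
      fix x
      show "(\<lambda>j. h j x) \<longlonglongrightarrow> indicator ?Z x"
      proof (cases "g x = 0")
        case True
        then show ?thesis by (simp add: h_def)
      next
        case False
        then have gp: "g x > 0" using g0[of x] by simp
        obtain N :: nat where N: "real N > 2 / g x" using reals_Archimedean2 by blast
        have "eventually (\<lambda>j. h j x = 0) sequentially"
        proof (rule eventually_sequentiallyI[of N])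
          fix j assume "N \<le> j"
          then have "real j + 1 > 2 / g x" using N by linarith
          then have "(real j + 1) * g x > 2" using pos_divide_less_eq[of "g x" 2 "real j + 1"] gp by simp
          then show "h j x = 0" by (simp add: h_def)
        qed
        then have "(\<lambda>j. h j x) \<longlonglongrightarrow> 0" by (rule tendsto_eventually)
        then show ?thesis using False by simp
      qed
    qed
    show "AE x in \<nu>. norm (h j x) \<le> 1" for j using h01 by simp
  qed
  have "integral\<^sup>L \<nu> (indicator ?Z) \<ge> \<eta>"
    by (rule tendsto_lowerbound[OF lim]) (use hnu in auto)
  moreover have "integral\<^sup>L \<nu> (indicator ?Z) = measure \<nu> ?Z" using bp_space[OF bn] by simp
  ultimately show False using null nuD eta by auto
qed

lemma frontier_fin_Union:
  fixes F :: "'a::topological_space set set"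
  shows "finite F \<Longrightarrow> frontier (\<Union>F) \<subseteq> (\<Union>T\<in>F. frontier T)"
proof (induction F rule: finite_induct)
  case empty then show ?case by simp
next
  case (insert T F)
  have "frontier (\<Union>(insert T F)) = frontier (T \<union> \<Union>F)" by simp
  also have "\<dots> \<subseteq> frontier T \<union> frontier (\<Union>F)" by (rule frontier_Un_subset)
  also have "\<dots> \<subseteq> (\<Union>S\<in>insert T F. frontier S)" using insert.IH by blast
  finally show ?case .
qed

lemma mono_lam: "0 \<le> (l::real) \<Longrightarrow> l \<le> 1 \<Longrightarrow> 0 \<le> X \<Longrightarrow> X \<le> b \<Longrightarrow> 0 \<le> l * X \<and> l * X \<le> b"
proof -
  assume a: "0 \<le> l" "l \<le> 1" "0 \<le> X" "X \<le> b"
  have "l * X \<le> X" using a mult_left_le_one_le by blast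
  then show ?thesis using a by simp
qed

lemma core:
  fixes \<Delta> :: "'a::metric_space measure set" and r :: "'a \<Rightarrow> real"
  assumes cpt: "compact (UNIV :: 'a set)" and bpD: "\<forall>\<mu>\<in>\<Delta>. borel_prob \<mu>"
    and wsc: "weak_star_closed \<Delta>" and fu: "free_ultrafilter \<omega>"
    and sbp: "small_boundary_property \<Delta>" and rc: "continuous_on UNIV r"
    and ep: "\<epsilon> > 0" and eta: "\<eta> > 0"
  shows "\<exists>c. continuous_on UNIV c \<and> (\<forall>x. \<bar>c x - r x\<bar> \<le> \<epsilon> / 2) \<and> (\<forall>\<mu>\<in>\<Delta>. measure \<mu> {x. \<bar>c x\<bar> < \<epsilon> / 4} \<le> \<eta>)"
proof -
  define \<delta> where "\<delta> = \<epsilon> / 4"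
  have dp: "\<delta> > 0" using ep by (simp add: \<delta>_def)
  define U where "U = {y. - \<epsilon> / 4 < r y}"
  define K where "K = {y. 0 \<le> r y}"
  have Uo: "open U" unfolding U_def by (intro open_Collect_less continuous_on_const rc)
  have Kc: "compact K"
  proof -
    have "closed K" unfolding K_def by (intro closed_Collect_le continuous_on_const rc)
    then show ?thesis using closed_Int_compact[OF _ cpt] by simp
  qed
  define T where "T = {V. open V \<and> V \<subseteq> U \<and> (\<forall>\<mu>\<in>\<Delta>. measure \<mu> (frontier V) = 0)}"
  have KT: "K \<subseteq> \<Union>T"
  proof
    fix x assume "x \<in> K"
    then have "x \<in> U" using ep by (simp add: K_def U_def)
    then obtain V where "open V" "x \<in> V" "V \<subseteq> U" "\<forall>\<mu>\<in>\<Delta>. measure \<mu> (frontier V) = 0"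
      using sbp Uo unfolding small_boundary_property_def by blast
    then show "x \<in> \<Union>T" unfolding T_def by blast
  qed
  obtain T' where T': "T' \<subseteq> T" "finite T'" "K \<subseteq> \<Union>T'"
    using compactE[OF Kc KT] T_def by blast
  define W where "W = \<Union>T'"
  have Wo: "open W" using T' unfolding W_def T_def by auto
  have WU: "W \<subseteq> U" using T' unfolding W_def T_def by auto
  have KW: "K \<subseteq> W" using T' unfolding W_def by auto
  have Wnull: "measure \<mu> (frontier W) = 0" if mu: "\<mu> \<in> \<Delta>" for \<mu>
  proof -
    have bp: "borel_prob \<mu>" using bpD mu by blast
    interpret prob_space \<mu> using bp bp_prob by blast
    have fs: "frontier S \<in> sets \<mu>" for S using bp_sets[OF bp] borel_closed[OF frontier_closed] by blast
    have "measure \<mu> (frontier W) \<le> measure \<mu> (\<Union>V\<in>T'. frontier V)"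
      by (rule finite_measure_mono) (use frontier_fin_Union[OF T'(2)] fs T'(2) W_def in auto)
    also have "\<dots> \<le> (\<Sum>V\<in>T'. measure \<mu> (frontier V))"
      by (rule measure_UNION_le) (use T'(2) fs in auto)
    also have "\<dots> = 0"
      by (rule sum.neutral) (use T' mu in \<open>auto simp: T_def\<close>)
    finally show ?thesis using measure_nonneg[of \<mu> "frontier W"] by linarith
  qed
  show ?thesis
  proof (cases "W = UNIV")
    case True
    define c where "c x = max (r x) \<delta>" for x
    have rx: "- \<epsilon> / 4 < r x" for x using WU True by (auto simp: U_def)
    have "\<bar>c x - r x\<bar> \<le> \<epsilon> / 2" for x
      using rx[of x] ep unfolding c_def \<delta>_def by (cases "r x \<le> \<epsilon> / 4") (auto simp: max_def)
    then have "\<forall>x. \<bar>c x - r x\<bar> \<le> \<epsilon> / 2" by blast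
    moreover have "continuous_on UNIV c" unfolding c_def by (intro continuous_intros rc)
    moreover have "{x. \<bar>c x\<bar> < \<epsilon> / 4} = {}" using dp by (auto simp: c_def \<delta>_def)
    ultimately show ?thesis using eta by (intro exI[of _ c]) auto
  next
    case nU: False
    show ?thesis
    proof (cases "W = {}")
      case True
      define c where "c x = min (r x) (- \<delta>)" for x
      have rx: "r x < 0" for x using KW True by (auto simp: K_def not_le)
      have "\<bar>c x - r x\<bar> \<le> \<epsilon> / 2" for x
        using rx[of x] ep unfolding c_def \<delta>_def by (cases "r x \<le> - \<epsilon> / 4") (auto simp: min_def)
      then have "\<forall>x. \<bar>c x - r x\<bar> \<le> \<epsilon> / 2" by blast
      moreover have "continuous_on UNIV c" unfolding c_def by (intro continuous_intros rc)
      moreover have "{x. \<bar>c x\<bar> < \<epsilon> / 4} = {}" using dp by (auto simp: c_def \<delta>_def)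
      ultimately show ?thesis using eta by (intro exI[of _ c]) auto
    next
      case nE: False
      have nC: "- W \<noteq> {}" using nU by auto
      define Dp where "Dp y = infdist y (- W)" for y
      define Dm where "Dm y = infdist y W" for y
      define gf where "gf y = max (Dp y) (Dm y)" for y
      have Dpc: "continuous_on UNIV Dp" unfolding Dp_def by (intro continuous_on_infdist continuous_on_id)
      have Dmc: "continuous_on UNIV Dm" unfolding Dm_def by (intro continuous_on_infdist continuous_on_id)
      have gfc: "continuous_on UNIV gf" unfolding gf_def by (intro continuous_intros Dpc Dmc)
      have Dp0: "0 \<le> Dp y" and Dm0: "0 \<le> Dm y" for y by (simp_all add: Dp_def Dm_def infdist_nonneg)
      have gf0: "0 \<le> gf y" for y using Dp0[of y] by (simp add: gf_def le_max_iff_disj)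
      have gfz: "{x. gf x = 0} \<subseteq> frontier W"
      proof
        fix y assume "y \<in> {x. gf x = 0}"
        then have "Dp y = 0" "Dm y = 0" using Dp0[of y] Dm0[of y] by (auto simp: gf_def)
        then have "y \<in> closure (- W)" "y \<in> closure W"
          using in_closure_iff_infdist_zero[OF nC] in_closure_iff_infdist_zero[OF nE]
          by (auto simp: Dp_def Dm_def)
        then show "y \<in> frontier W" by (simp add: frontier_closures)
      qed
      have gnull: "\<forall>\<mu>\<in>\<Delta>. measure \<mu> {x. gf x = 0} = 0"
      proof
        fix \<mu> assume mu: "\<mu> \<in> \<Delta>"
        have bp: "borel_prob \<mu>" using bpD mu by blast
        interpret prob_space \<mu> using bp bp_prob by blast
        have "measure \<mu> {x. gf x = 0} \<le> measure \<mu> (frontier W)"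
          by (rule finite_measure_mono[OF gfz]) (use bp_sets[OF bp] borel_closed[OF frontier_closed] in blast)
        then show "measure \<mu> {x. gf x = 0} = 0" using Wnull[OF mu] measure_nonneg[of \<mu> "{x. gf x = 0}"] by linarith
      qed
      obtain \<kappa> where kp: "\<kappa> > 0" and ksm: "\<forall>\<mu>\<in>\<Delta>. measure \<mu> {x. gf x < \<kappa>} \<le> \<eta>"
        using unif_small[OF cpt bpD wsc fu gfc gf0 gnull eta] by blast
      define lp where "lp y = min 1 (Dp y / \<kappa>)" for y
      define lm where "lm y = min 1 (Dm y / \<kappa>)" for y
      define c where "c y = lp y * max (r y) \<delta> + lm y * min (r y) (- \<delta>) + (1 - lp y - lm y) * r y" for y
      have cc: "continuous_on UNIV c" unfolding c_def lp_def lm_def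
        by (intro continuous_intros rc Dpc Dmc) (use kp in auto)
      have lp01: "0 \<le> lp y" "lp y \<le> 1" for y using Dp0[of y] kp by (auto simp: lp_def)
      have lm01: "0 \<le> lm y" "lm y \<le> 1" for y using Dm0[of y] kp by (auto simp: lm_def)
      have pt: "\<bar>c y - r y\<bar> \<le> \<epsilon> / 2 \<and> (\<kappa> \<le> gf y \<longrightarrow> \<delta> \<le> \<bar>c y\<bar>)" for y
      proof (cases "y \<in> W")
        case True
        then have "Dm y = 0" by (simp add: Dm_def)
        then have lm0: "lm y = 0" by (simp add: lm_def)
        have ry: "- \<epsilon> / 4 < r y" using True WU by (auto simp: U_def)
        have ceq: "c y - r y = lp y * (max (r y) \<delta> - r y)" by (simp add: c_def lm0 algebra_simps)
        have "0 \<le> max (r y) \<delta> - r y" "max (r y) \<delta> - r y \<le> \<epsilon> / 2" using ry ep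
          unfolding \<delta>_def by (cases "r y \<le> \<epsilon> / 4"; simp add: max_def)+
        then have "0 \<le> c y - r y \<and> c y - r y \<le> \<epsilon> / 2" unfolding ceq using mono_lam lp01 by blast
        moreover have "\<delta> \<le> \<bar>c y\<bar>" if "\<kappa> \<le> gf y"
        proof -
          have "gf y = Dp y" using \<open>Dm y = 0\<close> Dp0[of y] by (simp add: gf_def)
          then have "lp y = 1" using that kp by (simp add: lp_def)
          then have "c y = max (r y) \<delta>" by (simp add: c_def lm0)
          then show ?thesis by simp
        qed
        ultimately show ?thesis by auto
      next
        case False
        then have "Dp y = 0" by (simp add: Dp_def)
        then have lp0: "lp y = 0" by (simp add: lp_def)
        have ry: "r y < 0"
        proof (rule ccontr)
          assume "\<not> r y < 0"
          then have "y \<in> K" by (simp add: K_def)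
          then show False using KW False by blast
        qed
        have ceq: "r y - c y = lm y * (r y - min (r y) (- \<delta>))" by (simp add: c_def lp0 algebra_simps)
        have "0 \<le> r y - min (r y) (- \<delta>)" "r y - min (r y) (- \<delta>) \<le> \<epsilon> / 2" using ry ep
          unfolding \<delta>_def by (cases "r y \<le> - \<epsilon> / 4"; simp add: min_def)+
        then have "0 \<le> r y - c y \<and> r y - c y \<le> \<epsilon> / 2" unfolding ceq using mono_lam lm01 by blast
        moreover have "\<delta> \<le> \<bar>c y\<bar>" if "\<kappa> \<le> gf y"
        proof -
          have "gf y = Dm y" using \<open>Dp y = 0\<close> Dm0[of y] by (simp add: gf_def)
          then have "lm y = 1" using that kp by (simp add: lm_def)
          then have "c y = min (r y) (- \<delta>)" by (simp add: c_def lp0)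
          then show ?thesis using dp by simp
        qed
        ultimately show ?thesis by auto
      qed
      have sub: "{x. \<bar>c x\<bar> < \<epsilon> / 4} \<subseteq> {x. gf x < \<kappa>}"
        using pt by (force simp: \<delta>_def not_le[symmetric])
      have "\<forall>\<mu>\<in>\<Delta>. measure \<mu> {x. \<bar>c x\<bar> < \<epsilon> / 4} \<le> \<eta>"
      proof
        fix \<mu> assume mu: "\<mu> \<in> \<Delta>"
        have bp: "borel_prob \<mu>" using bpD mu by blast
        interpret prob_space \<mu> using bp bp_prob by blast
        have "measure \<mu> {x. \<bar>c x\<bar> < \<epsilon> / 4} \<le> measure \<mu> {x. gf x < \<kappa>}"
          by (rule finite_measure_mono[OF sub meas_open_set[OF bp gfc]])
        then show "measure \<mu> {x. \<bar>c x\<bar> < \<epsilon> / 4} \<le> \<eta>" using ksm mu by fastforce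
      qed
      then show ?thesis using cc pt by blast
    qed
  qed
qed

lemma ts_upper:
  fixes \<Delta> :: "'a::metric_space measure set" and g :: "'a \<Rightarrow> real"
  assumes cpt: "compact (UNIV::'a set)" and bpD: "\<forall>\<mu>\<in>\<Delta>. borel_prob \<mu>" and gc: "continuous_on UNIV g"
    and mu: "\<mu> \<in> \<Delta>"
  shows "integral\<^sup>L \<mu> g \<le> trace_sup \<Delta> g"
proof -
  obtain B where B: "\<And>x. norm (g x) \<le> B" using cont_bnd[OF cpt gc] by blast
  have ib: "integral\<^sup>L \<nu> g \<le> B" if "\<nu> \<in> \<Delta>" for \<nu>
  proof -
    have bp: "borel_prob \<nu>" using bpD that by blast
    interpret prob_space \<nu> using bp bp_prob by blast
    have "integral\<^sup>L \<nu> g \<le> integral\<^sup>L \<nu> (\<lambda>_. B)"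
    proof (rule integral_mono)
      show "integrable \<nu> g" by (rule bp_int[OF cpt bp gc])
      show "integrable \<nu> (\<lambda>_. B)" by simp
      fix x show "g x \<le> B" using B[of x] by simp
    qed
    then show ?thesis by (simp add: prob_space)
  qed
  have "bdd_above ((\<lambda>\<nu>. integral\<^sup>L \<nu> g) ` \<Delta>)" by (rule bdd_aboveI2) (rule ib)
  then show ?thesis unfolding trace_sup_def using mu by (auto intro: cSUP_upper)
qed

lemma ts_le:
  assumes "\<forall>\<mu>\<in>\<Delta>. integral\<^sup>L \<mu> g \<le> c" and "0 \<le> c"
  shows "trace_sup \<Delta> g \<le> c"
  unfolding trace_sup_def using assms by (auto intro!: cSUP_least)

lemma ts_nonneg:
  fixes \<Delta> :: "'a::metric_space measure set" and g :: "'a \<Rightarrow> real"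
  assumes cpt: "compact (UNIV::'a set)" and bpD: "\<forall>\<mu>\<in>\<Delta>. borel_prob \<mu>" and gc: "continuous_on UNIV g"
    and g0: "\<And>x. 0 \<le> g x"
  shows "0 \<le> trace_sup \<Delta> g"
proof (cases "\<Delta> = {}")
  case True then show ?thesis by (simp add: trace_sup_def)
next
  case False
  then obtain \<mu> where mu: "\<mu> \<in> \<Delta>" by blast
  have "0 \<le> integral\<^sup>L \<mu> g" by (rule Bochner_Integration.integral_nonneg) (simp add: g0)
  also have "\<dots> \<le> trace_sup \<Delta> g" by (rule ts_upper[OF cpt bpD gc mu])
  finally show ?thesis .
qed

lemma ts_mono:
  fixes \<Delta> :: "'a::metric_space measure set" and g h :: "'a \<Rightarrow> real"
  assumes cpt: "compact (UNIV::'a set)" and bpD: "\<forall>\<mu>\<in>\<Delta>. borel_prob \<mu>"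
    and gc: "continuous_on UNIV g" and hc: "continuous_on UNIV h"
    and g0: "\<And>x. 0 \<le> g x" and gh: "\<And>x. g x \<le> h x"
  shows "trace_sup \<Delta> g \<le> trace_sup \<Delta> h"
proof (rule ts_le)
  show "0 \<le> trace_sup \<Delta> h" by (rule ts_nonneg[OF cpt bpD hc]) (use g0 gh in \<open>blast intro: order_trans\<close>)
  show "\<forall>\<mu>\<in>\<Delta>. integral\<^sup>L \<mu> g \<le> trace_sup \<Delta> h"
  proof
    fix \<mu> assume mu: "\<mu> \<in> \<Delta>"
    have bp: "borel_prob \<mu>" using bpD mu by blast
    have "integral\<^sup>L \<mu> g \<le> integral\<^sup>L \<mu> h"
      by (rule integral_mono) (use bp_int[OF cpt bp gc] bp_int[OF cpt bp hc] gh in auto)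
    also have "\<dots> \<le> trace_sup \<Delta> h" by (rule ts_upper[OF cpt bpD hc mu])
    finally show "integral\<^sup>L \<mu> g \<le> trace_sup \<Delta> h" .
  qed
qed

lemma ell_infI: "(\<And>n. continuous_on UNIV (f n)) \<Longrightarrow> (\<And>n x. cmod (f n x) \<le> B) \<Longrightarrow> f \<in> ell_inf"
  unfolding ell_inf_def by blast

lemma ell_inf_cont: "f \<in> ell_inf \<Longrightarrow> continuous_on UNIV (f n)"
  unfolding ell_inf_def by blast

lemma ell_inf_bnd: "f \<in> ell_inf \<Longrightarrow> \<exists>B. \<forall>n x. cmod (f n x) \<le> B"
  unfolding ell_inf_def by blast

lemma ell_norm_ge:
  assumes B: "\<And>n x. cmod (f n x) \<le> B"
  shows "cmod (f n x) \<le> ell_norm f"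
proof -
  have b1: "bdd_above (range (\<lambda>x. cmod (f m x)))" for m by (rule bdd_aboveI2) (rule B)
  have s1: "(SUP x. cmod (f m x)) \<le> B" for m by (rule cSUP_least) (auto intro: B)
  have b2: "bdd_above (range (\<lambda>m. SUP x. cmod (f m x)))" by (rule bdd_aboveI2) (rule s1)
  have "cmod (f n x) \<le> (SUP x. cmod (f n x))" by (rule cSUP_upper) (use b1 in auto)
  also have "\<dots> \<le> ell_norm f" unfolding ell_norm_def by (rule cSUP_upper) (use b2 in auto)
  finally show ?thesis .
qed

lemma ell_norm_le:
  assumes B: "\<And>n x. cmod (f n x) \<le> B"
  shows "ell_norm f \<le> B"
  unfolding ell_norm_def by (intro cSUP_least) (auto intro: B)

lemma ell_norm_nonneg:
  assumes B: "\<And>n x. cmod (f n x) \<le> B"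
  shows "0 \<le> ell_norm f"
proof -
  have "cmod (f 0 undefined) \<le> ell_norm f" by (rule ell_norm_ge[OF B])
  then show ?thesis using norm_ge_zero[of "f 0 undefined"] by linarith
qed

lemma J2_zero: "(\<lambda>n x. 0) \<in> J2 \<omega> \<Delta>"
proof -
  have "trace_sup \<Delta> (\<lambda>x. (cmod 0)\<^sup>2) = 0" by (simp add: trace_sup_def)
  moreover have "(\<lambda>n x. 0::complex) \<in> ell_inf" by (rule ell_infI[where B=0]) auto
  ultimately show ?thesis by (simp add: J2_def)
qed

lemma J2_ell: "f \<in> J2 \<omega> \<Delta> \<Longrightarrow> f \<in> ell_inf"
  by (simp add: J2_def)

lemma J2_tend: "f \<in> J2 \<omega> \<Delta> \<Longrightarrow> ((\<lambda>n. trace_sup \<Delta> (\<lambda>x. (cmod (f n x))\<^sup>2)) \<longlongrightarrow> 0) \<omega>"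
  by (simp add: J2_def)

lemma J2_I:
  fixes \<Delta> :: "'a::metric_space measure set"
  assumes cpt: "compact (UNIV::'a set)" and bpD: "\<forall>\<mu>\<in>\<Delta>. borel_prob \<mu>"
    and f: "f \<in> ell_inf" and le: "\<And>n. trace_sup \<Delta> (\<lambda>x. (cmod (f n x))\<^sup>2) \<le> t n"
    and t: "(t \<longlongrightarrow> 0) \<omega>"
  shows "f \<in> J2 \<omega> \<Delta>"
proof -
  have c: "continuous_on UNIV (\<lambda>x. (cmod (f n x))\<^sup>2)" for n
    by (intro continuous_intros ell_inf_cont[OF f])
  have "((\<lambda>n. trace_sup \<Delta> (\<lambda>x. (cmod (f n x))\<^sup>2)) \<longlongrightarrow> 0) \<omega>"
  proof (rule tendsto_sandwich[OF _ _ tendsto_const t])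
    show "eventually (\<lambda>n. 0 \<le> trace_sup \<Delta> (\<lambda>x. (cmod (f n x))\<^sup>2)) \<omega>"
      by (rule always_eventually) (auto intro: ts_nonneg[OF cpt bpD c])
    show "eventually (\<lambda>n. trace_sup \<Delta> (\<lambda>x. (cmod (f n x))\<^sup>2) \<le> t n) \<omega>"
      by (rule always_eventually) (auto intro: le)
  qed
  then show ?thesis using f by (simp add: J2_def)
qed

lemma qn_le:
  assumes f: "f \<in> ell_inf" and j: "j \<in> J2 \<omega> \<Delta>"
  shows "quot_norm (J2 \<omega> \<Delta>) f \<le> ell_norm (\<lambda>n x. f n x - j n x)"
  unfolding quot_norm_def
proof (rule cINF_lower[OF _ j])
  obtain Bf where Bf: "\<And>n x. cmod (f n x) \<le> Bf" using ell_inf_bnd[OF f] by blast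
  have "0 \<le> ell_norm (\<lambda>n x. f n x - j' n x)" if jj: "j' \<in> J2 \<omega> \<Delta>" for j'
  proof -
    obtain Bj where Bj: "\<And>n x. cmod (j' n x) \<le> Bj" using ell_inf_bnd[OF J2_ell[OF jj]] by blast
    have "cmod (f n x - j' n x) \<le> Bf + Bj" for n x
      using norm_triangle_ineq4[of "f n x" "j' n x"] Bf[of n x] Bj[of n x] by linarith
    then show ?thesis by (rule ell_norm_nonneg)
  qed
  then show "bdd_below ((\<lambda>j. ell_norm (\<lambda>n x. f n x - j n x)) ` J2 \<omega> \<Delta>)"
    by (rule bdd_belowI2)
qed

lemma qn_lt:
  assumes "quot_norm (J2 \<omega> \<Delta>) f < \<epsilon>"
  shows "\<exists>j\<in>J2 \<omega> \<Delta>. ell_norm (\<lambda>n x. f n x - j n x) < \<epsilon>"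
proof -
  have ne: "(\<lambda>j. ell_norm (\<lambda>n x. f n x - j n x)) ` J2 \<omega> \<Delta> \<noteq> {}" using J2_zero by blast
  from cInf_lessD[OF ne] assms show ?thesis unfolding quot_norm_def by blast
qed

lemma inv_trunc:
  fixes t \<delta> :: real
  assumes d: "\<delta> > 0"
  shows "\<bar>t / max (t\<^sup>2) (\<delta>\<^sup>2)\<bar> \<le> 1 / \<delta>"
proof (cases "\<delta> \<le> \<bar>t\<bar>")
  case True
  then have "\<delta>\<^sup>2 \<le> t\<^sup>2" using d by (metis abs_ge_zero abs_of_pos power2_abs power_mono)
  then have m: "max (t\<^sup>2) (\<delta>\<^sup>2) = t\<^sup>2" by simp
  have tp: "\<bar>t\<bar> > 0" using True d by linarith
  have "\<bar>t / t\<^sup>2\<bar> = 1 / \<bar>t\<bar>" using tp by (simp add: power2_eq_square abs_mult)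
  also have "\<dots> \<le> 1 / \<delta>" using True d by (simp add: frac_le)
  finally show ?thesis using m by simp
next
  case False
  then have "t\<^sup>2 \<le> \<delta>\<^sup>2" using d by (metis abs_ge_zero linorder_not_le less_imp_le power2_abs power_mono)
  then have m: "max (t\<^sup>2) (\<delta>\<^sup>2) = \<delta>\<^sup>2" by simp
  have "\<bar>t / \<delta>\<^sup>2\<bar> = \<bar>t\<bar> / \<delta>\<^sup>2" using d by (simp add: abs_divide)
  also have "\<dots> \<le> \<delta> / \<delta>\<^sup>2" using False d by (intro divide_right_mono) auto
  also have "\<dots> = 1 / \<delta>" using d by (simp add: power2_eq_square)
  finally show ?thesis using m by simp
qed

lemma prod_trunc:
  fixes t \<delta> :: real
  assumes d: "\<delta> > 0"
  shows "(t * (t / max (t\<^sup>2) (\<delta>\<^sup>2)) - 1)\<^sup>2 \<le> indicator {x. \<bar>x\<bar> < \<delta>} t"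
proof (cases "\<delta> \<le> \<bar>t\<bar>")
  case True
  then have "\<delta>\<^sup>2 \<le> t\<^sup>2" using d by (metis abs_ge_zero abs_of_pos power2_abs power_mono)
  then have m: "max (t\<^sup>2) (\<delta>\<^sup>2) = t\<^sup>2" by simp
  have "t \<noteq> 0" using True d by auto
  then have "t * (t / t\<^sup>2) = 1" by (simp add: power2_eq_square)
  then show ?thesis using m by simp
next
  case False
  have mp: "max (t\<^sup>2) (\<delta>\<^sup>2) > 0" using d by (simp add: less_max_iff_disj)
  have q: "0 \<le> t * (t / max (t\<^sup>2) (\<delta>\<^sup>2))" using mp by (simp add: mult.assoc[symmetric] power2_eq_square[symmetric])
  have "t * (t / max (t\<^sup>2) (\<delta>\<^sup>2)) = t\<^sup>2 / max (t\<^sup>2) (\<delta>\<^sup>2)" by (simp add: power2_eq_square)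
  also have "\<dots> \<le> 1" using mp by simp
  finally have q1: "t * (t / max (t\<^sup>2) (\<delta>\<^sup>2)) \<le> 1" .
  define q where "q = t * (t / max (t\<^sup>2) (\<delta>\<^sup>2))"
  have "(1 - q) ^ 2 \<le> 1" by (rule power_le_one) (use q q1 in \<open>auto simp: q_def\<close>)
  then have "(t * (t / max (t\<^sup>2) (\<delta>\<^sup>2)) - 1)\<^sup>2 \<le> 1" unfolding q_def by (simp add: power2_commute)
  then show ?thesis using False by simp
qed

lemma ome_tend: "free_ultrafilter \<omega> \<Longrightarrow> ((\<lambda>n. 1 / (real n + 1)) \<longlongrightarrow> 0) \<omega>"
proof -
  assume fu: "free_ultrafilter \<omega>"
  have "(\<lambda>n. 1 / (real n + 1)) \<longlonglongrightarrow> 0"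
    using LIMSEQ_inverse_real_of_nat by (simp add: inverse_eq_divide add.commute)
  from filterlim_mono[OF this order_refl fu_seq[OF fu]] show ?thesis .
qed

lemma cmod_ImRe: "(cmod (z - complex_of_real (Re z)))\<^sup>2 \<le> (cmod (z - cnj z))\<^sup>2"
  by (simp add: cmod_power2)

lemma sbp_rr0:
  fixes \<Delta> :: "'a::metric_space measure set" and \<omega> :: "nat filter"
  assumes cpt: "compact (UNIV :: 'a set)" and bpD: "\<forall>\<mu>\<in>\<Delta>. borel_prob \<mu>"
    and wsc: "weak_star_closed \<Delta>" and fu: "free_ultrafilter \<omega>"
    and sbp: "small_boundary_property \<Delta>"
  shows "quot_real_rank_zero (J2 \<omega> \<Delta>)"
  unfolding quot_real_rank_zero_def
proof (intro ballI impI allI)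
  fix a :: "nat \<Rightarrow> 'a \<Rightarrow> complex" and \<epsilon> :: real
  assume a: "a \<in> ell_inf" and sa: "quot_selfadj (J2 \<omega> \<Delta>) a" and ep: "\<epsilon> > 0"
  obtain A where A: "\<And>n x. cmod (a n x) \<le> A" using ell_inf_bnd[OF a] by blast
  have ac: "continuous_on UNIV (a n)" for n by (rule ell_inf_cont[OF a])
  have rc: "continuous_on UNIV (\<lambda>x. Re (a n x))" for n by (intro continuous_intros ac)
  have "\<forall>n. \<exists>c. continuous_on UNIV c \<and> (\<forall>x. \<bar>c x - Re (a n x)\<bar> \<le> \<epsilon> / 2) \<and>
      (\<forall>\<mu>\<in>\<Delta>. measure \<mu> {x. \<bar>c x\<bar> < \<epsilon> / 4} \<le> 1 / (real n + 1))"
  proof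
    fix n
    have "1 / (real n + 1) > 0" by simp
    from core[OF cpt bpD wsc fu sbp rc ep this]
    show "\<exists>c. continuous_on UNIV c \<and> (\<forall>x. \<bar>c x - Re (a n x)\<bar> \<le> \<epsilon> / 2) \<and>
      (\<forall>\<mu>\<in>\<Delta>. measure \<mu> {x. \<bar>c x\<bar> < \<epsilon> / 4} \<le> 1 / (real n + 1))" .
  qed
  then have "\<exists>cn. \<forall>n. continuous_on UNIV (cn n) \<and> (\<forall>x. \<bar>cn n x - Re (a n x)\<bar> \<le> \<epsilon> / 2) \<and>
      (\<forall>\<mu>\<in>\<Delta>. measure \<mu> {x. \<bar>cn n x\<bar> < \<epsilon> / 4} \<le> 1 / (real n + 1))" by (rule choice)
  then obtain cn where cn: "\<forall>n. continuous_on UNIV (cn n) \<and> (\<forall>x. \<bar>cn n x - Re (a n x)\<bar> \<le> \<epsilon> / 2) \<and>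
      (\<forall>\<mu>\<in>\<Delta>. measure \<mu> {x. \<bar>cn n x\<bar> < \<epsilon> / 4} \<le> 1 / (real n + 1))" ..
  have cnc: "continuous_on UNIV (cn n)" for n using cn by blast
  have cnr: "\<bar>cn n x - Re (a n x)\<bar> \<le> \<epsilon> / 2" for n x using cn by blast
  have cnm: "measure \<mu> {x. \<bar>cn n x\<bar> < \<epsilon> / 4} \<le> 1 / (real n + 1)" if "\<mu> \<in> \<Delta>" for n \<mu> using cn that by blast
  define \<delta> where "\<delta> = \<epsilon> / 4"
  have dp: "\<delta> > 0" using ep by (simp add: \<delta>_def)
  define c where "c n x = complex_of_real (cn n x)" for n x
  define b where "b n x = complex_of_real (cn n x / max ((cn n x)\<^sup>2) (\<delta>\<^sup>2))" for n x
  define j where "j n x = a n x - complex_of_real (Re (a n x))" for n x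
  have cnb: "\<bar>cn n x\<bar> \<le> A + \<epsilon> / 2" for n x
    using cnr[of n x] abs_Re_le_cmod[of "a n x"] A[of n x] by linarith
  have cc: "continuous_on UNIV (c n)" for n unfolding c_def by (intro continuous_intros cnc)
  have c_ell: "c \<in> ell_inf" by (rule ell_infI[OF cc, where B="A + \<epsilon> / 2"]) (simp add: c_def cnb)
  have c_sa: "quot_selfadj (J2 \<omega> \<Delta>) c"
    unfolding quot_selfadj_def by (simp add: c_def J2_zero)
  have mpos: "max ((cn n x)\<^sup>2) (\<delta>\<^sup>2) \<noteq> 0" for n x
  proof -
    have "0 < \<delta>\<^sup>2" using dp by simp
    moreover have "\<delta>\<^sup>2 \<le> max ((cn n x)\<^sup>2) (\<delta>\<^sup>2)" by simp
    ultimately show ?thesis by linarith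
  qed
  have bc: "continuous_on UNIV (b n)" for n unfolding b_def
    by (intro continuous_intros cnc) (use mpos in auto)
  have b_ell: "b \<in> ell_inf"
  proof (rule ell_infI[OF bc, where B="1 / \<delta>"])
    fix n x
    have "cmod (b n x) = \<bar>cn n x / max ((cn n x)\<^sup>2) (\<delta>\<^sup>2)\<bar>" by (simp only: b_def norm_of_real)
    then show "cmod (b n x) \<le> 1 / \<delta>" using inv_trunc[OF dp] by simp
  qed
  define e where "e n x = c n x * b n x - 1" for n x
  have e_eq: "e n x = complex_of_real (cn n x * (cn n x / max ((cn n x)\<^sup>2) (\<delta>\<^sup>2)) - 1)" for n x
    by (simp add: e_def c_def b_def)
  define er where "er n x = cn n x * (cn n x / max ((cn n x)\<^sup>2) (\<delta>\<^sup>2)) - 1" for n x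
  have ee: "cmod (e n x) = \<bar>er n x\<bar>" for n x by (simp only: e_eq er_def norm_of_real)
  have ee2: "(cmod (e n x))\<^sup>2 = (er n x)\<^sup>2" for n x by (simp add: ee)
  have ersq: "(er n x)\<^sup>2 \<le> indicator {x. \<bar>cn n x\<bar> < \<delta>} x" for n x
    using prod_trunc[OF dp, of "cn n x"] by (simp add: er_def indicator_def)
  have er1: "(er n x)\<^sup>2 \<le> 1" for n x
  proof -
    have "indicator {x. \<bar>cn n x\<bar> < \<delta>} x \<le> (1::real)" by (simp add: indicator_def)
    then show ?thesis using ersq[of n x] by linarith
  qed
  have ec: "continuous_on UNIV (e n)" for n unfolding e_def by (intro continuous_intros cc bc)
  have e_ell: "e \<in> ell_inf"
  proof (rule ell_infI[OF ec, where B = 1])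
    fix n x
    show "cmod (e n x) \<le> 1" unfolding ee using er1[of n x] by (simp add: abs_square_le_1)
  qed
  have e_J: "e \<in> J2 \<omega> \<Delta>"
  proof (rule J2_I[OF cpt bpD e_ell _ ome_tend[OF fu]])
    fix n
    show "trace_sup \<Delta> (\<lambda>x. (cmod (e n x))\<^sup>2) \<le> 1 / (real n + 1)"
    proof (rule ts_le)
      show "0 \<le> 1 / (real n + 1)" by simp
      show "\<forall>\<mu>\<in>\<Delta>. integral\<^sup>L \<mu> (\<lambda>x. (cmod (e n x))\<^sup>2) \<le> 1 / (real n + 1)"
      proof
        fix \<mu> assume mu: "\<mu> \<in> \<Delta>"
        have bp: "borel_prob \<mu>" using bpD mu by blast
        interpret prob_space \<mu> using bp bp_prob by blast
        let ?S = "{x. \<bar>cn n x\<bar> < \<delta>}"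
        have acn: "continuous_on UNIV (\<lambda>x. \<bar>cn n x\<bar>)" by (intro continuous_intros cnc)
        have S: "?S \<in> sets \<mu>" by (rule meas_open_set[OF bp acn])
        have "integral\<^sup>L \<mu> (\<lambda>x. (cmod (e n x))\<^sup>2) \<le> integral\<^sup>L \<mu> (indicator ?S)"
        proof (rule integral_mono)
          show "integrable \<mu> (\<lambda>x. (cmod (e n x))\<^sup>2)"
            by (rule bp_int[OF cpt bp]) (intro continuous_intros ec)
          show "integrable \<mu> (indicator ?S :: 'a \<Rightarrow> real)"
            by (rule integrable_real_indicator) (use S in \<open>auto simp: emeasure_finite top.not_eq_extremum[symmetric]\<close>)
          fix x
          show "(cmod (e n x))\<^sup>2 \<le> indicator ?S x" unfolding ee2 by (rule ersq)
        qed
        also have "\<dots> = measure \<mu> ?S" using bp_space[OF bp] by simp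
        also have "\<dots> \<le> 1 / (real n + 1)" using cnm[OF mu, of n] by (simp add: \<delta>_def)
        finally show "integral\<^sup>L \<mu> (\<lambda>x. (cmod (e n x))\<^sup>2) \<le> 1 / (real n + 1)" .
      qed
    qed
  qed
  have c_inv: "quot_invertible (J2 \<omega> \<Delta>) c"
    unfolding quot_invertible_def
  proof (rule bexI[OF _ b_ell], rule conjI)
    show "(\<lambda>n x. c n x * b n x - 1) \<in> J2 \<omega> \<Delta>" using e_J by (simp add: e_def[abs_def])
    have "(\<lambda>n x. b n x * c n x - 1) = e" by (simp add: e_def[abs_def] mult.commute)
    then show "(\<lambda>n x. b n x * c n x - 1) \<in> J2 \<omega> \<Delta>" using e_J by simp
  qed
  have jc: "continuous_on UNIV (j n)" for n unfolding j_def by (intro continuous_intros ac)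
  have j_ell: "j \<in> ell_inf"
  proof (rule ell_infI[OF jc, where B = "2 * A"])
    fix n x
    have "cmod (j n x) \<le> cmod (a n x) + cmod (complex_of_real (Re (a n x)))"
      unfolding j_def by (rule norm_triangle_ineq4)
    also have "\<dots> \<le> 2 * A" using A[of n x] abs_Re_le_cmod[of "a n x"] by simp
    finally show "cmod (j n x) \<le> 2 * A" .
  qed
  have j_J: "j \<in> J2 \<omega> \<Delta>"
  proof (rule J2_I[OF cpt bpD j_ell _ J2_tend[OF sa[unfolded quot_selfadj_def]]])
    fix n
    show "trace_sup \<Delta> (\<lambda>x. (cmod (j n x))\<^sup>2) \<le> trace_sup \<Delta> (\<lambda>x. (cmod (a n x - cnj (a n x)))\<^sup>2)"
      by (rule ts_mono[OF cpt bpD]) (auto intro!: continuous_intros ac jc simp: j_def cmod_ImRe)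
  qed
  have ac_ell: "(\<lambda>n x. a n x - c n x) \<in> ell_inf"
  proof (rule ell_infI[where B = "A + (A + \<epsilon> / 2)"])
    show "continuous_on UNIV (\<lambda>x. a n x - c n x)" for n by (intro continuous_intros ac cc)
    fix n x
    have "cmod (a n x - c n x) \<le> cmod (a n x) + cmod (c n x)" by (rule norm_triangle_ineq4)
    also have "\<dots> \<le> A + (A + \<epsilon> / 2)" using A[of n x] cnb[of n x] by (simp add: c_def)
    finally show "cmod (a n x - c n x) \<le> A + (A + \<epsilon> / 2)" .
  qed
  have "quot_norm (J2 \<omega> \<Delta>) (\<lambda>n x. a n x - c n x) \<le> ell_norm (\<lambda>n x. (a n x - c n x) - j n x)"
    by (rule qn_le[OF ac_ell j_J])
  also have "\<dots> \<le> \<epsilon> / 2"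
  proof (rule ell_norm_le)
    fix n x
    have "(a n x - c n x) - j n x = complex_of_real (Re (a n x) - cn n x)" by (simp add: j_def c_def)
    then have "cmod ((a n x - c n x) - j n x) = \<bar>Re (a n x) - cn n x\<bar>" by (simp only: norm_of_real)
    then show "cmod ((a n x - c n x) - j n x) \<le> \<epsilon> / 2" using cnr[of n x] by (simp add: abs_minus_commute)
  qed
  also have "\<dots> < \<epsilon>" using ep by simp
  finally have "quot_norm (J2 \<omega> \<Delta>) (\<lambda>n x. a n x - c n x) < \<epsilon>" .
  then show "\<exists>c\<in>ell_inf. quot_selfadj (J2 \<omega> \<Delta>) c \<and> quot_invertible (J2 \<omega> \<Delta>) c \<and>
      quot_norm (J2 \<omega> \<Delta>) (\<lambda>n x. a n x - c n x) < \<epsilon>"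
    using c_ell c_sa c_inv by blast
qed

lemma sq3: "((p::real) + q + r)\<^sup>2 \<le> 3 * (p\<^sup>2 + q\<^sup>2 + r\<^sup>2)"
proof -
  have "0 \<le> (p - q)\<^sup>2 + (q - r)\<^sup>2 + (p - r)\<^sup>2" by simp
  then show ?thesis by (simp add: power2_eq_square algebra_simps)
qed

lemma key_ineq:
  fixes z w bb :: complex and B \<delta> :: real
  assumes B: "cmod bb \<le> B" "0 < B" and d: "\<delta> * B = 1 / 2"
    and small: "\<bar>Re (z + w)\<bar> < \<delta>"
  shows "1 \<le> 12 * (B\<^sup>2 + 1) * ((cmod (z - cnj z))\<^sup>2 + (cmod w)\<^sup>2 + (cmod (z * bb - 1))\<^sup>2)"
proof -
  define u where "u = cmod (z - cnj z)"
  define v where "v = cmod w"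
  define e where "e = cmod (z * bb - 1)"
  have dp: "0 < \<delta>" using small abs_ge_zero[of "Re (z + w)"] by linarith
  have u0: "0 \<le> u" and v0: "0 \<le> v" and e0: "0 \<le> e" by (simp_all add: u_def v_def e_def)
  have imz: "\<bar>Im z\<bar> = u / 2"
  proof -
    have "z - cnj z = complex_of_real (2 * Im z) * \<i>" by (simp add: complex_eq_iff)
    then have "u = \<bar>2 * Im z\<bar>" by (simp add: u_def norm_mult)
    then show ?thesis by simp
  qed
  have rez: "\<bar>Re z\<bar> \<le> \<delta> + v"
  proof -
    have "Re z = Re (z + w) - Re w" by simp
    moreover have "\<bar>Re w\<bar> \<le> v" unfolding v_def by (rule abs_Re_le_cmod)
    ultimately show ?thesis using small by linarith
  qed
  have cz: "cmod z \<le> \<delta> + v + u / 2" using cmod_le[of z] imz rez by linarith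
  have "1 = cmod (z * bb - (z * bb - 1))" by simp
  also have "\<dots> \<le> cmod (z * bb) + e" unfolding e_def by (rule norm_triangle_ineq4)
  also have "cmod (z * bb) = cmod z * cmod bb" by (simp add: norm_mult)
  also have "cmod z * cmod bb \<le> (\<delta> + v + u / 2) * B"
    by (rule mult_mono[OF cz B(1)]) (use u0 v0 dp in auto)
  finally have "1 \<le> (\<delta> + v + u / 2) * B + e" by simp
  moreover have "(\<delta> + v + u / 2) * B = \<delta> * B + B * v + B * u / 2" by (simp add: algebra_simps)
  ultimately have h0: "1 / 2 \<le> B * v + B * u / 2 + e" using d by linarith
  have "0 \<le> B * u" using B(2) u0 by simp
  then have h: "1 / 2 \<le> B * v + B * u + e" using h0 by linarith
  have p: "0 \<le> B * v + B * u + e" using B(2) u0 v0 e0 by simp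
  have "(1/2)\<^sup>2 \<le> (B * v + B * u + e)\<^sup>2" by (rule power_mono[OF h]) simp
  also have "\<dots> \<le> 3 * ((B * v)\<^sup>2 + (B * u)\<^sup>2 + e\<^sup>2)" by (rule sq3)
  also have "\<dots> \<le> 3 * ((B\<^sup>2 + 1) * (u\<^sup>2 + v\<^sup>2 + e\<^sup>2))"
  proof -
    have "(B * v)\<^sup>2 + (B * u)\<^sup>2 + e\<^sup>2 = B\<^sup>2 * (u\<^sup>2 + v\<^sup>2) + e\<^sup>2" by (simp add: power_mult_distrib algebra_simps)
    also have "\<dots> \<le> (B\<^sup>2 + 1) * (u\<^sup>2 + v\<^sup>2) + (B\<^sup>2 + 1) * e\<^sup>2"
    proof (rule add_mono)
      show "B\<^sup>2 * (u\<^sup>2 + v\<^sup>2) \<le> (B\<^sup>2 + 1) * (u\<^sup>2 + v\<^sup>2)" by (rule mult_right_mono) auto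
      have "0 \<le> B\<^sup>2 * e\<^sup>2" by simp
      then show "e\<^sup>2 \<le> (B\<^sup>2 + 1) * e\<^sup>2" by (simp add: algebra_simps)
    qed
    finally show ?thesis by (simp add: algebra_simps)
  qed
  finally have "(1/2)\<^sup>2 \<le> 3 * ((B\<^sup>2 + 1) * (u\<^sup>2 + v\<^sup>2 + e\<^sup>2))" .
  then have "1 \<le> 12 * ((B\<^sup>2 + 1) * (u\<^sup>2 + v\<^sup>2 + e\<^sup>2))" by (simp add: power2_eq_square)
  then show ?thesis unfolding u_def v_def e_def by (simp only: mult.assoc)
qed

lemma keyK:
  fixes \<Delta> :: "'a::metric_space measure set" and g :: "'a \<Rightarrow> real" and \<omega> :: "nat filter"
  assumes cpt: "compact (UNIV :: 'a set)" and bpD: "\<forall>\<mu>\<in>\<Delta>. borel_prob \<mu>" and fu: "free_ultrafilter \<omega>"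
    and rr: "quot_real_rank_zero (J2 \<omega> \<Delta>)" and gc: "continuous_on UNIV g" and ep: "\<epsilon> > 0"
  shows "\<exists>\<delta>>0. \<forall>\<eta>>0. \<exists>g'. continuous_on UNIV g' \<and> (\<forall>x. \<bar>g' x - g x\<bar> < \<epsilon>) \<and>
            (\<forall>\<mu>\<in>\<Delta>. measure \<mu> {x. \<bar>g' x\<bar> < \<delta>} \<le> \<eta>)"
proof -
  let ?J = "J2 \<omega> \<Delta>"
  obtain Bg where Bg: "\<And>x. norm (g x) \<le> Bg" using cont_bnd[OF cpt gc] by blast
  define a where "a n x = complex_of_real (g x)" for n :: nat and x
  have a_ell: "a \<in> ell_inf"
    by (rule ell_infI[where B = Bg]) (use Bg in \<open>auto simp: a_def intro!: continuous_intros gc\<close>)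
  have a_sa: "quot_selfadj ?J a" unfolding quot_selfadj_def by (simp add: a_def J2_zero)
  have "\<exists>c\<in>ell_inf. quot_selfadj ?J c \<and> quot_invertible ?J c \<and> quot_norm ?J (\<lambda>n x. a n x - c n x) < \<epsilon>"
    using rr a_ell a_sa ep unfolding quot_real_rank_zero_def by blast
  then obtain c where c_ell: "c \<in> ell_inf" and c_sa: "quot_selfadj ?J c" and c_inv: "quot_invertible ?J c"
    and c_qn: "quot_norm ?J (\<lambda>n x. a n x - c n x) < \<epsilon>" by blast
  obtain b where b_ell: "b \<in> ell_inf" and cb: "(\<lambda>n x. c n x * b n x - 1) \<in> ?J"
    using c_inv unfolding quot_invertible_def by blast
  obtain j where jJ: "j \<in> ?J" and jn: "ell_norm (\<lambda>n x. (a n x - c n x) - j n x) < \<epsilon>"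
    using qn_lt[OF c_qn] by blast
  have j_ell: "j \<in> ell_inf" by (rule J2_ell[OF jJ])
  obtain Bb where Bb: "\<And>n x. cmod (b n x) \<le> Bb" using ell_inf_bnd[OF b_ell] by blast
  obtain Bc where Bc: "\<And>n x. cmod (c n x) \<le> Bc" using ell_inf_bnd[OF c_ell] by blast
  obtain Bj where Bj: "\<And>n x. cmod (j n x) \<le> Bj" using ell_inf_bnd[OF j_ell] by blast
  define B where "B = \<bar>Bb\<bar> + 1"
  have Bp: "0 < B" by (simp add: B_def)
  have bB: "cmod (b n x) \<le> B" for n x using Bb[of n x] by (simp add: B_def)
  define \<delta> where "\<delta> = 1 / (2 * B)"
  have dp: "\<delta> > 0" using Bp by (simp add: \<delta>_def)
  have dB: "\<delta> * B = 1 / 2" using Bp by (simp add: \<delta>_def)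
  define K where "K = 12 * (B\<^sup>2 + 1)"
  have K0: "0 \<le> K" by (simp add: K_def)
  have cc: "continuous_on UNIV (c n)" for n by (rule ell_inf_cont[OF c_ell])
  have bc: "continuous_on UNIV (b n)" for n by (rule ell_inf_cont[OF b_ell])
  have jc: "continuous_on UNIV (j n)" for n by (rule ell_inf_cont[OF j_ell])
  define U where "U n x = (cmod (c n x - cnj (c n x)))\<^sup>2" for n x
  define V where "V n x = (cmod (j n x))\<^sup>2" for n x
  define E where "E n x = (cmod (c n x * b n x - 1))\<^sup>2" for n x
  have Uc: "continuous_on UNIV (U n)" for n unfolding U_def by (intro continuous_intros cc)
  have Vc: "continuous_on UNIV (V n)" for n unfolding V_def by (intro continuous_intros jc)
  have Ec: "continuous_on UNIV (E n)" for n unfolding E_def by (intro continuous_intros cc bc)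
  have T1: "((\<lambda>n. trace_sup \<Delta> (U n)) \<longlongrightarrow> 0) \<omega>"
    using J2_tend[OF c_sa[unfolded quot_selfadj_def]] by (simp add: U_def[abs_def])
  have T2: "((\<lambda>n. trace_sup \<Delta> (V n)) \<longlongrightarrow> 0) \<omega>"
    using J2_tend[OF jJ] by (simp add: V_def[abs_def])
  have T3: "((\<lambda>n. trace_sup \<Delta> (E n)) \<longlongrightarrow> 0) \<omega>"
    using J2_tend[OF cb] by (simp add: E_def[abs_def])
  have TT: "((\<lambda>n. K * (trace_sup \<Delta> (U n) + trace_sup \<Delta> (V n) + trace_sup \<Delta> (E n))) \<longlongrightarrow> 0) \<omega>"
    using tendsto_mult_right_zero[OF tendsto_add_zero[OF tendsto_add_zero[OF T1 T2] T3], of K] by simp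
  show ?thesis
  proof (intro exI[of _ \<delta>] conjI allI impI)
    show "\<delta> > 0" by (rule dp)
    fix \<eta> :: real assume eta: "\<eta> > 0"
    have "eventually (\<lambda>n. K * (trace_sup \<Delta> (U n) + trace_sup \<Delta> (V n) + trace_sup \<Delta> (E n)) < \<eta>) \<omega>"
      using order_tendstoD(2)[OF TT eta] .
    then have "\<omega> = bot \<or> (\<exists>n. K * (trace_sup \<Delta> (U n) + trace_sup \<Delta> (V n) + trace_sup \<Delta> (E n)) < \<eta>)"
      by (rule eventually_happens)
    then obtain n where n: "K * (trace_sup \<Delta> (U n) + trace_sup \<Delta> (V n) + trace_sup \<Delta> (E n)) < \<eta>"
      using fu_nb[OF fu] by blast
    define g' where "g' x = Re (c n x + j n x)" for x
    have g'c: "continuous_on UNIV g'" unfolding g'_def by (intro continuous_intros cc jc)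
    have close: "\<bar>g' x - g x\<bar> < \<epsilon>" for x
    proof -
      have bnd: "cmod ((a m y - c m y) - j m y) \<le> Bg + Bc + Bj" for m y
      proof -
        have "cmod ((a m y - c m y) - j m y) \<le> cmod (a m y - c m y) + cmod (j m y)" by (rule norm_triangle_ineq4)
        also have "\<dots> \<le> cmod (a m y) + cmod (c m y) + cmod (j m y)" using norm_triangle_ineq4[of "a m y" "c m y"] by simp
        also have "\<dots> \<le> Bg + Bc + Bj" using Bg[of y] Bc[of m y] Bj[of m y] by (simp add: a_def)
        finally show ?thesis .
      qed
      have "\<bar>g' x - g x\<bar> = \<bar>Re ((a n x - c n x) - j n x)\<bar>" by (simp add: g'_def a_def abs_minus_commute)
      also have "\<dots> \<le> cmod ((a n x - c n x) - j n x)" by (rule abs_Re_le_cmod)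
      also have "\<dots> \<le> ell_norm (\<lambda>n x. (a n x - c n x) - j n x)" by (rule ell_norm_ge[OF bnd])
      also have "\<dots> < \<epsilon>" by (rule jn)
      finally show ?thesis .
    qed
    have meas: "measure \<mu> {x. \<bar>g' x\<bar> < \<delta>} \<le> \<eta>" if mu: "\<mu> \<in> \<Delta>" for \<mu>
    proof -
      have bp: "borel_prob \<mu>" using bpD mu by blast
      interpret prob_space \<mu> using bp bp_prob by blast
      let ?S = "{x. \<bar>g' x\<bar> < \<delta>}"
      have ag: "continuous_on UNIV (\<lambda>x. \<bar>g' x\<bar>)" by (intro continuous_intros g'c)
      have S: "?S \<in> sets \<mu>" by (rule meas_open_set[OF bp ag])
      have iU: "integrable \<mu> (U n)" by (rule bp_int[OF cpt bp Uc])
      have iV: "integrable \<mu> (V n)" by (rule bp_int[OF cpt bp Vc])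
      have iE: "integrable \<mu> (E n)" by (rule bp_int[OF cpt bp Ec])
      have pt: "indicator ?S x \<le> K * (U n x + V n x + E n x)" for x
      proof (cases "x \<in> ?S")
        case True
        then have "\<bar>Re (c n x + j n x)\<bar> < \<delta>" by (simp add: g'_def)
        from key_ineq[OF bB[of n x] Bp dB this]
        show ?thesis using True by (simp add: K_def U_def V_def E_def)
      next
        case False
        have "0 \<le> U n x + V n x + E n x" by (simp add: U_def V_def E_def)
        then show ?thesis using False K0 by simp
      qed
      have "measure \<mu> ?S = integral\<^sup>L \<mu> (indicator ?S)" using bp_space[OF bp] by simp
      also have "\<dots> \<le> integral\<^sup>L \<mu> (\<lambda>x. K * (U n x + V n x + E n x))"
      proof (rule integral_mono)
        show "integrable \<mu> (indicator ?S :: 'a \<Rightarrow> real)"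
          by (rule integrable_real_indicator) (use S in \<open>auto simp: emeasure_finite top.not_eq_extremum[symmetric]\<close>)
        show "integrable \<mu> (\<lambda>x. K * (U n x + V n x + E n x))"
          by (intro integrable_mult_right Bochner_Integration.integrable_add iU iV iE)
        fix x show "indicator ?S x \<le> K * (U n x + V n x + E n x)" by (rule pt)
      qed
      also have "\<dots> = K * (integral\<^sup>L \<mu> (U n) + integral\<^sup>L \<mu> (V n) + integral\<^sup>L \<mu> (E n))"
        using iU iV iE by (simp add: Bochner_Integration.integral_add)
      also have "\<dots> \<le> K * (trace_sup \<Delta> (U n) + trace_sup \<Delta> (V n) + trace_sup \<Delta> (E n))"
        by (intro mult_left_mono add_mono ts_upper[OF cpt bpD _ mu] Uc Vc Ec K0)
      also have "\<dots> < \<eta>" by (rule n)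
      finally show ?thesis by simp
    qed
    show "\<exists>g'. continuous_on UNIV g' \<and> (\<forall>x. \<bar>g' x - g x\<bar> < \<epsilon>) \<and> (\<forall>\<mu>\<in>\<Delta>. measure \<mu> {x. \<bar>g' x\<bar> < \<delta>} \<le> \<eta>)"
      using g'c close meas by blast
  qed
qed

lemma null_zero_approx:
  fixes \<Delta> :: "'a::metric_space measure set" and g0 :: "'a \<Rightarrow> real" and \<omega> :: "nat filter"
  assumes cpt: "compact (UNIV :: 'a set)" and bpD: "\<forall>\<mu>\<in>\<Delta>. borel_prob \<mu>" and fu: "free_ultrafilter \<omega>"
    and rr: "quot_real_rank_zero (J2 \<omega> \<Delta>)" and g0c: "continuous_on UNIV g0" and e0: "e0 > 0"
  shows "\<exists>G. continuous_on UNIV G \<and> (\<forall>x. \<bar>G x - g0 x\<bar> \<le> 2 * e0) \<and> (\<forall>\<mu>\<in>\<Delta>. measure \<mu> {x. G x = 0} = 0)"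
proof -
  define R where "R g \<epsilon> \<delta> \<eta> g' \<longleftrightarrow> continuous_on UNIV g' \<and> (\<forall>x. \<bar>g' x - g x\<bar> < \<epsilon>) \<and>
      (\<forall>\<mu>\<in>\<Delta>. measure \<mu> {x. \<bar>g' x\<bar> < \<delta>} \<le> \<eta>)" for g \<epsilon> \<delta> \<eta> and g' :: "'a \<Rightarrow> real"
  define Dl where "Dl g \<epsilon> = (SOME \<delta>. \<delta> > 0 \<and> (\<forall>\<eta>>0. \<exists>g'. R g \<epsilon> \<delta> \<eta> g'))" for g \<epsilon>
  define Gn where "Gn g \<epsilon> \<eta> = (SOME g'. R g \<epsilon> (Dl g \<epsilon>) \<eta> g')" for g \<epsilon> \<eta>
  have DlP: "Dl g \<epsilon> > 0 \<and> (\<forall>\<eta>>0. \<exists>g'. R g \<epsilon> (Dl g \<epsilon>) \<eta> g')"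
    if "continuous_on UNIV g" "\<epsilon> > 0" for g \<epsilon>
  proof -
    have "\<exists>\<delta>. \<delta> > 0 \<and> (\<forall>\<eta>>0. \<exists>g'. R g \<epsilon> \<delta> \<eta> g')"
      using keyK[OF cpt bpD fu rr that] unfolding R_def by blast
    then show ?thesis unfolding Dl_def by (rule someI_ex)
  qed
  have GnP: "R g \<epsilon> (Dl g \<epsilon>) \<eta> (Gn g \<epsilon> \<eta>)" if "continuous_on UNIV g" "\<epsilon> > 0" "\<eta> > 0" for g \<epsilon> \<eta>
  proof -
    have "\<exists>g'. R g \<epsilon> (Dl g \<epsilon>) \<eta> g'" using DlP[OF that(1,2)] that(3) by blast
    then show ?thesis unfolding Gn_def by (rule someI_ex)
  qed
  define st where "st = rec_nat (g0, e0) (\<lambda>k p. (Gn (fst p) (snd p) (1 / (real k + 1)), min (snd p / 2) (Dl (fst p) (snd p) / 4)))"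
  define gs where "gs k = fst (st k)" for k
  define es where "es k = snd (st k)" for k
  define ds where "ds k = Dl (gs k) (es k)" for k
  have gs0: "gs 0 = g0" and es0: "es 0 = e0" by (simp_all add: gs_def es_def st_def)
  have gsS: "gs (Suc k) = Gn (gs k) (es k) (1 / (real k + 1))" for k by (simp add: gs_def es_def st_def)
  have esS: "es (Suc k) = min (es k / 2) (ds k / 4)" for k by (simp add: gs_def es_def ds_def st_def)
  have inv: "continuous_on UNIV (gs k) \<and> es k > 0" for k
  proof (induction k)
    case 0 then show ?case using g0c e0 by (simp add: gs0 es0)
  next
    case (Suc k)
    then have ds: "ds k > 0" using DlP by (simp add: ds_def)
    have "R (gs k) (es k) (ds k) (1 / (real k + 1)) (gs (Suc k))"
      unfolding gsS ds_def by (rule GnP) (use Suc in auto)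
    then have "continuous_on UNIV (gs (Suc k))" by (simp add: R_def)
    moreover have "es (Suc k) > 0" using Suc ds by (simp add: esS)
    ultimately show ?case by simp
  qed
  have gsc: "continuous_on UNIV (gs k)" for k using inv by blast
  have esp: "es k > 0" for k using inv by blast
  have dsp: "ds k > 0" for k using DlP gsc esp by (simp add: ds_def)
  have Rk: "R (gs k) (es k) (ds k) (1 / (real k + 1)) (gs (Suc k))" for k
    unfolding gsS ds_def by (rule GnP) (use gsc esp in auto)
  have P1: "\<bar>gs (Suc k) x - gs k x\<bar> < es k" for k x using Rk[of k] by (simp add: R_def)
  have P2: "measure \<mu> {x. \<bar>gs (Suc k) x\<bar> < ds k} \<le> 1 / (real k + 1)" if "\<mu> \<in> \<Delta>" for k \<mu>
    using Rk[of k] that by (simp add: R_def)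
  have P3: "es (Suc k) \<le> es k / 2" "es (Suc k) \<le> ds k / 4" for k by (simp_all add: esS)
  have tele: "\<bar>gs m x - gs k x\<bar> \<le> 2 * (es k - es m)" if "k \<le> m" for k m x
    using that
  proof (induction m rule: dec_induct)
    case base then show ?case by simp
  next
    case (step m)
    have "\<bar>gs (Suc m) x - gs k x\<bar> \<le> \<bar>gs (Suc m) x - gs m x\<bar> + \<bar>gs m x - gs k x\<bar>" by linarith
    also have "\<dots> \<le> es m + 2 * (es k - es m)" using P1[of m x] step.IH by linarith
    also have "\<dots> \<le> 2 * (es k - es (Suc m))"
    proof -
      have "2 * es (Suc m) \<le> es m" using P3(1)[of m] by simp
      then show ?thesis by (simp add: algebra_simps)
    qed
    finally show ?case .
  qed
  have esb: "es k \<le> e0 / 2 ^ k" for k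
  proof (induction k)
    case 0 then show ?case by (simp add: es0)
  next
    case (Suc k)
    have "es (Suc k) \<le> es k / 2" by (rule P3(1))
    also have "\<dots> \<le> (e0 / 2 ^ k) / 2" using Suc.IH by (rule divide_right_mono) simp
    also have "\<dots> = e0 / 2 ^ Suc k" by simp
    finally show ?case .
  qed
  have es_lim: "es \<longlonglongrightarrow> 0"
  proof (rule tendsto_sandwich[of "\<lambda>_. 0" _ _ "\<lambda>k. e0 / 2 ^ k"])
    show "eventually (\<lambda>k. 0 \<le> es k) sequentially" using esp by (simp add: less_imp_le)
    show "eventually (\<lambda>k. es k \<le> e0 / 2 ^ k) sequentially" using esb by simp
    show "(\<lambda>k. 0) \<longlonglongrightarrow> (0::real)" by simp
    show "(\<lambda>k. e0 / 2 ^ k) \<longlonglongrightarrow> 0"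
      by (intro tendsto_divide_0[OF tendsto_const] filterlim_realpow_sequentially_gt1) simp
  qed
  have cauchy: "Cauchy (\<lambda>k. gs k x)" for x
  proof (rule metric_CauchyI)
    fix e :: real assume e: "e > 0"
    have "eventually (\<lambda>k. es k < e / 4) sequentially" using es_lim e by (intro order_tendstoD(2)) auto
    then obtain M where M: "\<forall>k\<ge>M. es k < e / 4" unfolding eventually_sequentially by blast
    show "\<exists>M. \<forall>m\<ge>M. \<forall>n\<ge>M. dist (gs m x) (gs n x) < e"
    proof (intro exI allI impI)
      fix m n assume mn: "M \<le> m" "M \<le> n"
      have "\<bar>gs m x - gs M x\<bar> \<le> 2 * es M" using tele[OF mn(1), of x] esp[of m] unfolding right_diff_distrib by linarith
      moreover have "\<bar>gs n x - gs M x\<bar> \<le> 2 * es M" using tele[OF mn(2), of x] esp[of n] unfolding right_diff_distrib by linarith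
      moreover have "es M < e / 4" using M by simp
      ultimately show "dist (gs m x) (gs n x) < e" by (simp add: dist_real_def)
    qed
  qed
  define G where "G x = lim (\<lambda>k. gs k x)" for x
  have Gl: "(\<lambda>k. gs k x) \<longlonglongrightarrow> G x" for x
    using cauchy[of x] by (simp add: G_def Cauchy_convergent_iff convergent_LIMSEQ_iff)
  have Gc: "\<bar>G x - gs k x\<bar> \<le> 2 * es k" for k x
  proof -
    have "(\<lambda>m. \<bar>gs m x - gs k x\<bar>) \<longlonglongrightarrow> \<bar>G x - gs k x\<bar>" by (intro tendsto_intros Gl)
    moreover have "eventually (\<lambda>m. \<bar>gs m x - gs k x\<bar> \<le> 2 * es k) sequentially"
    proof (rule eventually_sequentiallyI[of k])
      fix m assume "k \<le> m"
      then show "\<bar>gs m x - gs k x\<bar> \<le> 2 * es k" using tele[of k m x] esp[of m] unfolding right_diff_distrib by linarith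
    qed
    ultimately show ?thesis by (rule tendsto_upperbound) simp
  qed
  have Gcont: "continuous_on UNIV G"
  proof (rule uniform_limit_theorem[where F = sequentially])
    show "\<forall>\<^sub>F k in sequentially. continuous_on UNIV (gs k)" using gsc by simp
    show "uniform_limit UNIV gs G sequentially"
      unfolding uniform_limit_iff
    proof (intro allI impI)
      fix e :: real assume e: "e > 0"
      have "eventually (\<lambda>k. es k < e / 4) sequentially" using es_lim e by (intro order_tendstoD(2)) auto
      then show "\<forall>\<^sub>F k in sequentially. \<forall>x\<in>UNIV. dist (gs k x) (G x) < e"
      proof (rule eventually_mono)
        fix k assume ek: "es k < e / 4"
        show "\<forall>x\<in>UNIV. dist (gs k x) (G x) < e"
        proof
          fix x
          have a1: "\<bar>G x - gs k x\<bar> \<le> 2 * es k" by (rule Gc)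
          have a2: "2 * es k < e" using ek esp[of k] by linarith
          have "\<bar>G x - gs k x\<bar> < e" using a1 a2 by linarith
          then show "dist (gs k x) (G x) < e" by (simp add: dist_real_def abs_minus_commute)
        qed
      qed
    qed
    show "sequentially \<noteq> bot" by simp
  qed
  have Gnull: "measure \<mu> {x. G x = 0} = 0" if mu: "\<mu> \<in> \<Delta>" for \<mu>
  proof -
    have bp: "borel_prob \<mu>" using bpD mu by blast
    interpret prob_space \<mu> using bp bp_prob by blast
    have b: "measure \<mu> {x. G x = 0} \<le> 1 / (real k + 1)" for k
    proof -
      have "{x. G x = 0} \<subseteq> {x. \<bar>gs (Suc k) x\<bar> < ds k}"
      proof
        fix x assume "x \<in> {x. G x = 0}"
        then have "\<bar>gs (Suc k) x\<bar> \<le> 2 * es (Suc k)" using Gc[of x "Suc k"] by simp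
        also have "\<dots> \<le> ds k / 2" using P3(2)[of k] by simp
        also have "\<dots> < ds k" using dsp[of k] by simp
        finally show "x \<in> {x. \<bar>gs (Suc k) x\<bar> < ds k}" by simp
      qed
      moreover have "{x. \<bar>gs (Suc k) x\<bar> < ds k} \<in> sets \<mu>"
        by (rule meas_open_set[OF bp]) (intro continuous_intros gsc)
      ultimately have "measure \<mu> {x. G x = 0} \<le> measure \<mu> {x. \<bar>gs (Suc k) x\<bar> < ds k}"
        by (rule finite_measure_mono)
      then show ?thesis using P2[OF mu, of k] by linarith
    qed
    show ?thesis
    proof (rule ccontr)
      assume "measure \<mu> {x. G x = 0} \<noteq> 0"
      then have pos: "measure \<mu> {x. G x = 0} > 0" using measure_nonneg[of \<mu> "{x. G x = 0}"] by linarith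
      obtain k :: nat where k: "1 / (real k + 1) < measure \<mu> {x. G x = 0}"
      proof -
        obtain k where "inverse (real (Suc k)) < measure \<mu> {x. G x = 0}" using reals_Archimedean[OF pos] by blast
        then have "1 / (real k + 1) < measure \<mu> {x. G x = 0}" by (simp add: inverse_eq_divide add.commute)
        then show ?thesis using that by blast
      qed
      then show False using b[of k] by linarith
    qed
  qed
  have "\<forall>x. \<bar>G x - g0 x\<bar> \<le> 2 * e0" using Gc[of _ 0] by (simp add: gs0 es0)
  then show ?thesis using Gcont Gnull by blast
qed

lemma rr0_sbp:
  fixes \<Delta> :: "'a::metric_space measure set" and \<omega> :: "nat filter"
  assumes cpt: "compact (UNIV :: 'a set)" and bpD: "\<forall>\<mu>\<in>\<Delta>. borel_prob \<mu>" and fu: "free_ultrafilter \<omega>"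
    and rr: "quot_real_rank_zero (J2 \<omega> \<Delta>)"
  shows "small_boundary_property \<Delta>"
  unfolding small_boundary_property_def
proof (intro allI impI)
  fix x0 :: 'a and U :: "'a set"
  assume xU: "open U \<and> x0 \<in> U"
  obtain r where r: "r > 0" "ball x0 r \<subseteq> U" using xU open_contains_ball by blast
  define t where "t = r / 2"
  have tp: "t > 0" using r by (simp add: t_def)
  define g0 where "g0 y = t - dist x0 y" for y
  have g0c: "continuous_on UNIV g0" unfolding g0_def by (intro continuous_intros)
  have t4: "t / 4 > 0" using tp by simp
  obtain G where Gc: "continuous_on UNIV G" and Gb: "\<forall>x. \<bar>G x - g0 x\<bar> \<le> 2 * (t / 4)"
    and Gn: "\<forall>\<mu>\<in>\<Delta>. measure \<mu> {x. G x = 0} = 0"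
    using null_zero_approx[OF cpt bpD fu rr g0c t4] by blast
  define V where "V = {y. 0 < G y}"
  have Vo: "open V" unfolding V_def by (rule open_Collect_less[OF continuous_on_const Gc])
  have xV: "x0 \<in> V"
  proof -
    have "\<bar>G x0 - g0 x0\<bar> \<le> t / 2" using Gb by simp
    moreover have "g0 x0 = t" by (simp add: g0_def)
    ultimately have "\<bar>G x0 - t\<bar> \<le> t / 2" by simp
    then have "t / 2 \<le> G x0" using abs_le_D2 by fastforce
    then show ?thesis using tp by (simp add: V_def)
  qed
  have VU: "V \<subseteq> U"
  proof
    fix y assume "y \<in> V"
    then have Gy: "0 < G y" by (simp add: V_def)
    have "\<bar>G y - g0 y\<bar> \<le> t / 2" using Gb by simp
    then have "G y - t / 2 \<le> g0 y" using abs_le_D1 by fastforce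
    then have "G y - t / 2 \<le> t - dist x0 y" by (simp add: g0_def)
    then have "dist x0 y < r" using Gy r(1) t_def by linarith
    then show "y \<in> U" using r(2) by (auto simp: mem_ball)
  qed
  have fr: "frontier V \<subseteq> {x. G x = 0}"
  proof
    fix y assume y: "y \<in> frontier V"
    have "closure V \<subseteq> {x. 0 \<le> G x}"
      by (rule closure_minimal) (auto simp: V_def intro: closed_Collect_le[OF continuous_on_const Gc])
    moreover have "y \<in> closure V" "y \<notin> V" using y Vo by (auto simp: frontier_def interior_open)
    ultimately show "y \<in> {x. G x = 0}" by (auto simp: V_def)
  qed
  have "\<forall>\<mu>\<in>\<Delta>. measure \<mu> (frontier V) = 0"
  proof
    fix \<mu> assume mu: "\<mu> \<in> \<Delta>"
    have bp: "borel_prob \<mu>" using bpD mu by blast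
    interpret prob_space \<mu> using bp bp_prob by blast
    have "measure \<mu> (frontier V) \<le> measure \<mu> {x. G x = 0}"
      by (rule finite_measure_mono[OF fr meas_eq_set[OF bp Gc]])
    then show "measure \<mu> (frontier V) = 0" using Gn mu measure_nonneg[of \<mu> "frontier V"] by fastforce
  qed
  then show "\<exists>V. open V \<and> x0 \<in> V \<and> V \<subseteq> U \<and> (\<forall>\<mu>\<in>\<Delta>. measure \<mu> (frontier V) = 0)"
    using Vo xV VU by blast
qed

theorem theorem2p12:
  fixes \<Delta> :: "'a::metric_space measure set" and \<omega> :: "nat filter"
  assumes "compact (UNIV :: 'a set)"
    and "\<forall>\<mu>\<in>\<Delta>. borel_prob \<mu>"
    and "weak_star_closed \<Delta>"
    and "free_ultrafilter \<omega>"
  shows "quot_real_rank_zero (J2 \<omega> \<Delta>) \<longleftrightarrow> small_boundary_property \<Delta>"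
proof
  assume "quot_real_rank_zero (J2 \<omega> \<Delta>)"
  then show "small_boundary_property \<Delta>" by (rule rr0_sbp[OF assms(1,2,4)])
next
  assume "small_boundary_property \<Delta>"
  then show "quot_real_rank_zero (J2 \<omega> \<Delta>)" by (rule sbp_rr0[OF assms(1,2,3,4)])
qed

end
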